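(* Let $\mathcal C$ be a $\Delta$-complex labeled over $B(X,P)$, let $C$ be a $k$-cell of $\mathcal C$ with $k\ge2$ and characteristic map $\sigma\colon\Delta^k\to\mathcal C$. Let $q$ be any closed generalized path based at $v_0$ in $\partial\Delta^k$ (where $\partial\Delta^k$ is regarded as a $\Delta$-complex whose cells are the proper faces of $\Delta^k$), and let $p=\sigma(q)$ be its image generalized path in $\mathcal C$ (each face $F$ of $q$ replaced by the cell of $\mathcal C$ whose characteristic map is $\sigma|_F$). Then $\ell(C)\le\ell(p)$ in $M(X,P)$.
   Context: A $\Delta$-complex is a CW-complex in which each $k$-cell $c$ has a distinguished characteristic map $\sigma_c\colon\Delta^k\to\mathcal C$, $\Delta^k=[v_0,\dots,v_k]$ the standard simplex with ordered vertices, such that the restriction of $\sigma_c$ to each $(k-1)$-face (identified order-preservingly with $\Delta^{k-1}$) is the distinguished characteristic map of a $(k-1)$-cell. The root of $c$ is $\alpha(c)=\sigma_c(v_0)$; a $1$-cell $e$ is directed from $\alpha(e)=\sigma_e(v_0)$ to $\omega(e)=\sigma_e(v_1)$, and a formal inverse $e^{-1}$ with $\alpha(e^{-1})=\omega(e)$, $\omega(e^{-1})=\alpha(e)$ is adjoined. A generalized path is a sequence $e_1\cdots e_s$ ($s\ge0$) where each $e_i$ is a cell of dimension $\ge2$, a $1$-cell, or the formal inverse of a $1$-cell, with $\omega(e_{i-1})=\alpha(e_i)$, where for cells of dimension $\ge2$ one sets $\omega(c)=\alpha(c)$; it is closed at $v$ if it starts and ends at $v$. An immersion is a continuous map that is a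 local homeomorphism onto its image and commutes with characteristic maps. $B(X,P)$ is a $\Delta$-complex with one $0$-cell, $1$-cells indexed by $X$, $k$-cells ($2\le k\le n$) indexed by $P_k$, index sets pairwise disjoint, $P=\bigcup P_k$. $\mathcal C$ is labeled over $B(X,P)$ via an immersion $f_{\mathcal C}\colon\mathcal C\to B(X,P)$; $\ell(c)$ is the index of $f_{\mathcal C}(c)$, $\ell(e^{-1})=\ell(e)^{-1}$, and the label of a generalized path is the concatenated word in $(X\cup X^{-1}\cup P)^*$, read in $M(X,P)$. Boundary labels: for a $k$-cell $c$ ($k\ge2$) with characteristic map $\sigma$, let $c_i$ be the $(k-1)$-cell whose characteristic map is $\sigma$ restricted to the face omitting $v_i$, and $e(c)=\sigma([v_0,v_1])$; $bl(c)=\ell(\sigma[v_0,v_1])\ell(\sigma[v_1,v_2])\ell(\sigma[v_0,v_2])^{-1}$ if $k=2$, and $bl(c)=\ell(c_k)\cdots\ell(c_1)\ell(e(c))\ell(c_0)\ell(e(c))^{-1}$ if $k\ge3$; $bl(\rho)$ for $\rho\in P$ is the boundary label of the cell of $B(X,P)$ labeled $\rho$. $M(X,P)$ is the inverse monoid presented by generators $X\cup P$ and relations $\rho^2=\rho$, $\rho=\rho\,bl(\rho)$ for $\rho\in P$. Natural partial order: $a\le b$ iff $a=eb$ for an idempotent $e$. *)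

theory Defs
  imports Main
begin

text \<open>A Delta-complex is encoded combinatorially by its set of cells S, a dimension
function and face operators d i c (the cell whose characteristic map is the
restriction of sigma_c to the face omitting vertex v_i).\<close>

definition semisimplicial :: "'c set \<Rightarrow> ('c \<Rightarrow> nat) \<Rightarrow> (nat \<Rightarrow> 'c \<Rightarrow> 'c) \<Rightarrow> bool" where
  "semisimplicial S dim d \<longleftrightarrow>
     (\<forall>c\<in>S. \<forall>i\<le>dim c. 0 < dim c \<longrightarrow> d i c \<in> S \<and> dim (d i c) = dim c - 1) \<and>
     (\<forall>c\<in>S. \<forall>i j. i < j \<and> j \<le> dim c \<and> 2 \<le> dim c \<longrightarrow> d i (d j c) = d (j - 1) (d i c))"

text \<open>The cell whose characteristic map is sigma_c restricted to the face spanned by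
the vertices in F (a subset of {0..dim c}), identified order-preservingly with a
standard simplex: delete the complementary vertices, highest index first.\<close>

definition iface :: "(nat \<Rightarrow> 'c \<Rightarrow> 'c) \<Rightarrow> ('c \<Rightarrow> nat) \<Rightarrow> 'c \<Rightarrow> nat set \<Rightarrow> 'c" where
  "iface d dim c F = foldl (\<lambda>x j. d j x) c (rev (sorted_list_of_set ({0..dim c} - F)))"

definition ss_map :: "'c set \<Rightarrow> ('c \<Rightarrow> nat) \<Rightarrow> (nat \<Rightarrow> 'c \<Rightarrow> 'c) \<Rightarrow>
    'b set \<Rightarrow> ('b \<Rightarrow> nat) \<Rightarrow> (nat \<Rightarrow> 'b \<Rightarrow> 'b) \<Rightarrow> ('c \<Rightarrow> 'b) \<Rightarrow> bool" where
  "ss_map S dim d B dimB dB f \<longleftrightarrow>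
     (\<forall>c\<in>S. f c \<in> B \<and> dimB (f c) = dim c \<and>
        (\<forall>i\<le>dim c. 0 < dim c \<longrightarrow> f (d i c) = dB i (f c)))"

text \<open>Immersion: a map commuting with characteristic maps that is locally injective,
i.e. injective on the corners (c, j) at each vertex.\<close>

definition immersion :: "'c set \<Rightarrow> ('c \<Rightarrow> nat) \<Rightarrow> (nat \<Rightarrow> 'c \<Rightarrow> 'c) \<Rightarrow>
    'b set \<Rightarrow> ('b \<Rightarrow> nat) \<Rightarrow> (nat \<Rightarrow> 'b \<Rightarrow> 'b) \<Rightarrow> ('c \<Rightarrow> 'b) \<Rightarrow> bool" where
  "immersion S dim d B dimB dB f \<longleftrightarrow> ss_map S dim d B dimB dB f \<and>
     (\<forall>c\<in>S. \<forall>c'\<in>S. \<forall>j. j \<le> dim c \<and> j \<le> dim c' \<and> f c = f c' \<and>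
        iface d dim c {j} = iface d dim c' {j} \<longrightarrow> c = c')"

text \<open>B(X,P): a Delta-complex with exactly one 0-cell and cells of dimension at most n.
Its 1-cells play the role of X, its k-cells (k \<ge> 2) the role of P_k (each cell is its
own index, so the index sets are automatically pairwise disjoint).\<close>

definition is_BXP :: "nat \<Rightarrow> 'b set \<Rightarrow> ('b \<Rightarrow> nat) \<Rightarrow> (nat \<Rightarrow> 'b \<Rightarrow> 'b) \<Rightarrow> bool" where
  "is_BXP n B dimB dB \<longleftrightarrow> semisimplicial B dimB dB \<and>
     (\<exists>!v. v \<in> B \<and> dimB v = 0) \<and> (\<forall>b\<in>B. dimB b \<le> n)"

text \<open>Letters: (b, False) is the generator b, (b, True) its formal inverse.\<close>

definition alph :: "'b set \<Rightarrow> ('b \<Rightarrow> nat) \<Rightarrow> ('b \<times> bool) set" where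
  "alph B dimB = {(b, e). b \<in> B \<and> 1 \<le> dimB b}"

definition winv :: "('b \<times> bool) list \<Rightarrow> ('b \<times> bool) list" where
  "winv w = rev (map (\<lambda>(b, e). (b, \<not> e)) w)"

definition bl :: "('b \<Rightarrow> nat) \<Rightarrow> (nat \<Rightarrow> 'b \<Rightarrow> 'b) \<Rightarrow> 'b \<Rightarrow> ('b \<times> bool) list" where
  "bl dimB dB b =
    (if dimB b = 2 then [(dB 2 b, False), (dB 0 b, False), (dB 1 b, True)]
     else (let e = iface dB dimB b {0, 1} in
       map (\<lambda>i. (dB i b, False)) (rev [1..<dimB b + 1]) @
       [(e, False), (dB 0 b, False), (e, True)]))"

text \<open>The congruence on words defining M(X,P) as an inverse monoid presentation:
Wagner congruence plus the defining relations.\<close>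

inductive Meq :: "'b set \<Rightarrow> ('b \<Rightarrow> nat) \<Rightarrow> (nat \<Rightarrow> 'b \<Rightarrow> 'b) \<Rightarrow>
    ('b \<times> bool) list \<Rightarrow> ('b \<times> bool) list \<Rightarrow> bool"
  for B dimB dB where
  refl: "Meq B dimB dB u u"
| sym: "Meq B dimB dB u v \<Longrightarrow> Meq B dimB dB v u"
| trans: "Meq B dimB dB u v \<Longrightarrow> Meq B dimB dB v w \<Longrightarrow> Meq B dimB dB u w"
| cong: "Meq B dimB dB u v \<Longrightarrow> x \<in> lists (alph B dimB) \<Longrightarrow> y \<in> lists (alph B dimB) \<Longrightarrow>
         Meq B dimB dB (x @ u @ y) (x @ v @ y)"
| wagner1: "u \<in> lists (alph B dimB) \<Longrightarrow> Meq B dimB dB (u @ winv u @ u) u"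
| wagner2: "u \<in> lists (alph B dimB) \<Longrightarrow> v \<in> lists (alph B dimB) \<Longrightarrow>
         Meq B dimB dB (u @ winv u @ v @ winv v) (v @ winv v @ u @ winv u)"
| idem: "b \<in> B \<Longrightarrow> 2 \<le> dimB b \<Longrightarrow> Meq B dimB dB [(b, False), (b, False)] [(b, False)]"
| rel: "b \<in> B \<Longrightarrow> 2 \<le> dimB b \<Longrightarrow> Meq B dimB dB [(b, False)] ((b, False) # bl dimB dB b)"

definition Mle :: "'b set \<Rightarrow> ('b \<Rightarrow> nat) \<Rightarrow> (nat \<Rightarrow> 'b \<Rightarrow> 'b) \<Rightarrow>
    ('b \<times> bool) list \<Rightarrow> ('b \<times> bool) list \<Rightarrow> bool" where
  "Mle B dimB dB a b \<longleftrightarrow>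
     (\<exists>w \<in> lists (alph B dimB). Meq B dimB dB (w @ w) w \<and> Meq B dimB dB a (w @ b))"

text \<open>A step is (F, iv): F the vertex set of a proper face of Delta^k of dimension \<ge> 1,
iv = True marks the formal inverse of a 1-cell.\<close>

definition bd_step :: "nat \<Rightarrow> nat set \<times> bool \<Rightarrow> bool" where
  "bd_step k s \<longleftrightarrow> (case s of (F, iv) \<Rightarrow>
     F \<subseteq> {0..k} \<and> F \<noteq> {0..k} \<and> 2 \<le> card F \<and> (iv \<longrightarrow> card F = 2))"

definition st_alpha :: "nat set \<times> bool \<Rightarrow> nat" where
  "st_alpha s = (case s of (F, iv) \<Rightarrow> if iv then Max F else Min F)"

definition st_omega :: "nat set \<times> bool \<Rightarrow> nat" where
  "st_omega s = (case s of (F, iv) \<Rightarrow>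
     if card F = 2 then (if iv then Min F else Max F) else Min F)"

definition closed_gpath_bd :: "nat \<Rightarrow> nat \<Rightarrow> (nat set \<times> bool) list \<Rightarrow> bool" where
  "closed_gpath_bd k v q \<longleftrightarrow> (\<forall>s \<in> set q. bd_step k s) \<and>
     (q = [] \<or> (st_alpha (hd q) = v \<and> st_omega (last q) = v \<and>
        (\<forall>i. Suc i < length q \<longrightarrow> st_omega (q ! i) = st_alpha (q ! Suc i))))"

definition img_label :: "('c \<Rightarrow> 'b) \<Rightarrow> (nat \<Rightarrow> 'c \<Rightarrow> 'c) \<Rightarrow> ('c \<Rightarrow> nat) \<Rightarrow> 'c \<Rightarrow>
    (nat set \<times> bool) list \<Rightarrow> ('b \<times> bool) list" where
  "img_label f d dim c q = map (\<lambda>(F, iv). (f (iface d dim c F), iv)) q"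

end

theory Submission
  imports Defs
begin

locale amon =
  fixes G :: "'a set" and mul :: "'a \<Rightarrow> 'a \<Rightarrow> 'a" (infixl "\<odot>" 70) and one :: 'a
  assumes closed[simp]: "x \<in> G \<Longrightarrow> y \<in> G \<Longrightarrow> x \<odot> y \<in> G"
    and one_closed[simp]: "one \<in> G"
    and assoc[simp]: "x \<in> G \<Longrightarrow> y \<in> G \<Longrightarrow> z \<in> G \<Longrightarrow> x \<odot> y \<odot> z = x \<odot> (y \<odot> z)"
    and lunit[simp]: "x \<in> G \<Longrightarrow> one \<odot> x = x"
    and runit[simp]: "x \<in> G \<Longrightarrow> x \<odot> one = x"
begin

lemma idem_pseudo:
  assumes G: "a \<in> G" "b \<in> G"
    and w1: "a \<odot> b \<odot> a = a" and w1': "b \<odot> a \<odot> b = b"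
    and w2: "(b \<odot> a) \<odot> (a \<odot> b) = (a \<odot> b) \<odot> (b \<odot> a)"
    and id: "a \<odot> a = a"
  shows "b = a" and "b \<odot> b = b"
proof -
  have w1r: "a \<odot> (b \<odot> a) = a" using w1 G by simp
  have w1r': "b \<odot> (a \<odot> b) = b" using w1' G by simp
  have w2r: "b \<odot> (a \<odot> (a \<odot> b)) = a \<odot> (b \<odot> (b \<odot> a))" using w2 G by simp
  have w2y: "b \<odot> (a \<odot> (a \<odot> (b \<odot> y))) = a \<odot> (b \<odot> (b \<odot> (a \<odot> y)))" if "y \<in> G" for y
    using w2 G that by (simp del: assoc add: assoc[symmetric])
  have idr: "a \<odot> (a \<odot> x) = a \<odot> x" if "x \<in> G" for x using id G that
    by (simp del: assoc add: assoc[symmetric])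
  have ee: "a \<odot> (b \<odot> (a \<odot> (b \<odot> x))) = a \<odot> (b \<odot> x)" if "x \<in> G" for x
    using G that w1 by (simp del: assoc add: assoc[symmetric])
  have ff0: "b \<odot> (a \<odot> (b \<odot> a)) = b \<odot> a"
    using G w1' by (simp del: assoc add: assoc[symmetric])
  have b1: "b = a \<odot> (b \<odot> (b \<odot> a))"
  proof -
    have "b = b \<odot> (a \<odot> b)" using w1r' by simp
    also have "\<dots> = b \<odot> (a \<odot> (a \<odot> b))" using idr G by simp
    also have "\<dots> = a \<odot> (b \<odot> (b \<odot> a))" by (rule w2r)
    finally show ?thesis .
  qed
  have bb: "b \<odot> b = b"
  proof -
    have "b \<odot> b = (a \<odot> (b \<odot> (b \<odot> a))) \<odot> (a \<odot> (b \<odot> (b \<odot> a)))"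
      by (subst b1, subst (2) b1) (rule HOL.refl)
    also have "\<dots> = a \<odot> (b \<odot> (b \<odot> (a \<odot> (a \<odot> (b \<odot> (b \<odot> a))))))" using G by simp
    also have "\<dots> = a \<odot> (b \<odot> (a \<odot> (b \<odot> (b \<odot> (a \<odot> (b \<odot> a))))))" using w2y G
      by simp
    also have "\<dots> = a \<odot> (b \<odot> (b \<odot> (a \<odot> (b \<odot> a))))" using ee G by simp
    also have "\<dots> = a \<odot> (b \<odot> (b \<odot> a))" using ff0 G by simp
    also have "\<dots> = b" by (rule b1[symmetric])
    finally show ?thesis .
  qed
  show "b \<odot> b = b" by fact
  have bbr: "b \<odot> (b \<odot> x) = b \<odot> x" if "x \<in> G" for x using bb G that
    by (simp del: assoc add: assoc[symmetric])
  have "a = a \<odot> (b \<odot> a)" using w1r by simp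
  also have "\<dots> = a \<odot> (b \<odot> (b \<odot> a))" using bbr G by simp
  also have "\<dots> = b" by (rule b1[symmetric])
  finally show "b = a" by (rule HOL.sym)
qed

end

locale invmon = amon +
  fixes inv :: "'a \<Rightarrow> 'a"
  assumes inv_closed[simp]: "x \<in> G \<Longrightarrow> inv x \<in> G"
    and W1: "x \<in> G \<Longrightarrow> x \<odot> inv x \<odot> x = x"
    and inv_inv[simp]: "x \<in> G \<Longrightarrow> inv (inv x) = x"
    and inv_mul: "x \<in> G \<Longrightarrow> y \<in> G \<Longrightarrow> inv (x \<odot> y) = inv y \<odot> inv x"
    and W2: "x \<in> G \<Longrightarrow> y \<in> G \<Longrightarrow> (x \<odot> inv x) \<odot> (y \<odot> inv y) = (y \<odot> inv y) \<odot> (x \<odot> inv x)"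
    and inv_one[simp]: "inv one = one"
begin

lemma W1r[simp]: "x \<in> G \<Longrightarrow> x \<odot> (inv x \<odot> x) = x"
  using W1 by simp

lemma W1r'[simp]: "x \<in> G \<Longrightarrow> y \<in> G \<Longrightarrow> x \<odot> (inv x \<odot> (x \<odot> y)) = x \<odot> y"
  using W1[of x] by (simp del: assoc add: assoc[symmetric])

lemma W1i[simp]: "x \<in> G \<Longrightarrow> inv x \<odot> (x \<odot> inv x) = inv x"
  using W1r[of "inv x"] by simp

lemma W1i'[simp]: "x \<in> G \<Longrightarrow> y \<in> G \<Longrightarrow> inv x \<odot> (x \<odot> (inv x \<odot> y)) = inv x \<odot> y"
  using W1r'[of "inv x" y] by simp

definition idem where "idem e \<longleftrightarrow> e \<in> G \<and> e \<odot> e = e"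

lemma idem_inv: assumes "idem e" shows "inv e = e"
proof -
  have e: "e \<in> G" "e \<odot> e = e" using assms by (auto simp: idem_def)
  show ?thesis
  proof (rule idem_pseudo(1)[of e "inv e"])
    show "e \<odot> inv e \<odot> e = e" using W1 e by simp
    show "inv e \<odot> e \<odot> inv e = inv e" using W1[of "inv e"] e by simp
    show "inv e \<odot> e \<odot> (e \<odot> inv e) = e \<odot> inv e \<odot> (inv e \<odot> e)"
      using W2[of "inv e" e] e by (simp del: assoc)
  qed (use e in auto)
qed

lemma idem_xx: "x \<in> G \<Longrightarrow> idem (x \<odot> inv x)"
  unfolding idem_def by simp

lemma idem_xx': "x \<in> G \<Longrightarrow> idem (inv x \<odot> x)"
  using idem_xx[of "inv x"] by simp

lemma idem_comm: "idem e \<Longrightarrow> idem f \<Longrightarrow> e \<odot> f = f \<odot> e"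
  using W2[of e f] idem_inv[of e] idem_inv[of f] unfolding idem_def by (simp del: assoc)

lemma idem_mul: assumes e: "idem e" and f: "idem f" shows "idem (e \<odot> f)"
proof -
  have G: "e \<in> G" "f \<in> G" and ee: "e \<odot> e = e" and ff: "f \<odot> f = f" using e f by (auto simp: idem_def)
  have "e \<odot> f \<odot> (e \<odot> f) = e \<odot> (f \<odot> e) \<odot> f" using G by simp
  also have "\<dots> = e \<odot> (e \<odot> f) \<odot> f" using idem_comm[OF f e] by simp
  also have "\<dots> = (e \<odot> e) \<odot> (f \<odot> f)" using G by simp
  also have "\<dots> = e \<odot> f" using ee ff by simp
  finally show ?thesis using G by (simp add: idem_def)
qed

lemma assoc_ext: "a \<odot> b = c \<Longrightarrow> a \<in> G \<Longrightarrow> b \<in> G \<Longrightarrow> c \<in> G \<Longrightarrow> z \<in> G \<Longrightarrow>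
  a \<odot> (b \<odot> z) = c \<odot> z"
  by (metis assoc)

lemma idemD: "idem e \<Longrightarrow> e \<in> G" "idem e \<Longrightarrow> e \<odot> e = e"
  by (auto simp: idem_def)

lemma idem_ext: "idem e \<Longrightarrow> z \<in> G \<Longrightarrow> e \<odot> (e \<odot> z) = e \<odot> z"
  using assoc_ext[of e e e z] by (auto simp: idem_def)

lemma rd:
  assumes r: "idem r" and w: "w \<in> G" and h: "r \<odot> w = r"
  shows "r \<odot> (w \<odot> inv w) = r"
proof -
  have rG: "r \<in> G" using r by (simp add: idem_def)
  have ir: "inv r = r" using idem_inv[OF r] .
  have h2: "inv w \<odot> r = r"
    using inv_mul[of r w] h ir rG w by simp
  have c: "(w \<odot> inv w) \<odot> r = r \<odot> (w \<odot> inv w)"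
    using idem_comm[OF idem_xx[OF w] r] .
  have "r = r \<odot> r" using idemD[OF r] by simp
  also have "\<dots> = (r \<odot> w) \<odot> (inv w \<odot> r)" using h h2 by simp
  also have "\<dots> = r \<odot> ((w \<odot> inv w) \<odot> r)" using rG w by simp
  also have "\<dots> = r \<odot> (r \<odot> (w \<odot> inv w))" using c by simp
  also have "\<dots> = r \<odot> (w \<odot> inv w)" using idem_ext[OF r] w by simp
  finally show ?thesis by (rule HOL.sym)
qed

lemma pre:
  assumes r: "idem r" and G: "u \<in> G" "v \<in> G" and h: "r \<odot> (u \<odot> v) \<odot> inv (u \<odot> v) = r"
  shows "r \<odot> (u \<odot> (v \<odot> inv v)) = r \<odot> u"
proof -
  have rG: "r \<in> G" using r by (simp add: idem_def)
  have h': "r \<odot> (u \<odot> (v \<odot> (inv v \<odot> inv u))) = r" using h G rG by (simp add: inv_mul)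
  have c: "(v \<odot> inv v) \<odot> (inv u \<odot> u) = (inv u \<odot> u) \<odot> (v \<odot> inv v)"
    using idem_comm[OF idem_xx[of v] idem_xx'[of u]] G by simp
  have c0: "v \<odot> (inv v \<odot> (inv u \<odot> u)) = inv u \<odot> (u \<odot> (v \<odot> inv v))"
    using c G by simp
  have "r \<odot> u = (r \<odot> (u \<odot> (v \<odot> (inv v \<odot> inv u)))) \<odot> u" using h' by simp
  also have "\<dots> = r \<odot> (u \<odot> (v \<odot> (inv v \<odot> (inv u \<odot> u))))" using G rG by simp
  also have "\<dots> = r \<odot> (u \<odot> (inv u \<odot> (u \<odot> (v \<odot> inv v))))" using c0 by simp
  also have "\<dots> = r \<odot> (u \<odot> (v \<odot> inv v))" using G by simp
  finally show ?thesis by (rule HOL.sym)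
qed

lemma pre2:
  assumes r: "idem r" and G: "u \<in> G" "v \<in> G" and h: "r \<odot> (u \<odot> v) \<odot> inv (u \<odot> v) = r"
  shows "r \<odot> (u \<odot> inv u) = r"
proof -
  have rG: "r \<in> G" using r by (simp add: idem_def)
  have p: "r \<odot> (u \<odot> (v \<odot> inv v)) = r \<odot> u" by (rule pre[OF r G h])
  have "r \<odot> (u \<odot> inv u) = (r \<odot> (u \<odot> (v \<odot> inv v))) \<odot> inv u" using p G rG by simp
  also have "\<dots> = r \<odot> (u \<odot> v) \<odot> inv (u \<odot> v)" using G rG by (simp add: inv_mul)
  also have "\<dots> = r" by (rule h)
  finally show ?thesis .
qed

lemma split:
  assumes r: "idem r" and G: "u \<in> G" "v \<in> G" and h: "r \<odot> (u \<odot> v) = r"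
  shows "r \<odot> u = r \<odot> inv v"
proof -
  have rG: "r \<in> G" using r by (simp add: idem_def)
  have h1: "r \<odot> ((u \<odot> v) \<odot> inv (u \<odot> v)) = r" by (rule rd[OF r _ h]) (use G in simp)
  have p: "r \<odot> (u \<odot> (v \<odot> inv v)) = r \<odot> u" by (rule pre[OF r G]) (use h1 G rG in simp)
  have "r \<odot> inv v = (r \<odot> (u \<odot> v)) \<odot> inv v" using h by simp
  also have "\<dots> = r \<odot> (u \<odot> (v \<odot> inv v))" using G rG by simp
  finally show ?thesis using p by simp
qed

lemma transfer:
  assumes r: "idem r" and G: "y \<in> G" "z \<in> G" and h: "r \<odot> (y \<odot> inv y) = r" and e: "r \<odot> y = r \<odot> z"
  shows "r \<odot> (z \<odot> inv z) = r"
proof -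
  have rG: "r \<in> G" using r by (simp add: idem_def)
  have ir: "inv r = r" using idem_inv[OF r] .
  have k: "(r \<odot> x) \<odot> inv (r \<odot> x) = r \<odot> (x \<odot> inv x)" if "x \<in> G" for x
  proof -
    have c: "(x \<odot> inv x) \<odot> r = r \<odot> (x \<odot> inv x)" using idem_comm[OF idem_xx[OF that] r] .
    have "(r \<odot> x) \<odot> inv (r \<odot> x) = r \<odot> ((x \<odot> inv x) \<odot> r)" using that rG ir by (simp add: inv_mul)
    also have "\<dots> = r \<odot> (r \<odot> (x \<odot> inv x))" using c by simp
    also have "\<dots> = r \<odot> (x \<odot> inv x)" using idem_ext[OF r] that by simp
    finally show ?thesis .
  qed
  have "r \<odot> (z \<odot> inv z) = (r \<odot> z) \<odot> inv (r \<odot> z)" using k[OF G(2)] by simp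
  also have "\<dots> = (r \<odot> y) \<odot> inv (r \<odot> y)" using e by simp
  also have "\<dots> = r" using k[OF G(1)] h by simp
  finally show ?thesis .
qed

lemma lift:
  assumes "r \<odot> r' = r" "r \<in> G" "r' \<in> G" "y \<in> G" "z \<in> G" and "r' \<odot> y = r' \<odot> z"
  shows "r \<odot> y = r \<odot> z"
  by (metis assms assoc)

definition prodl :: "'a list \<Rightarrow> 'a" where "prodl ls = foldr (\<odot>) ls one"

lemma prodl_G: "set ls \<subseteq> G \<Longrightarrow> prodl ls \<in> G"
  by (induction ls) (auto simp: prodl_def)

lemma prodl_idem: "\<forall>e\<in>set ls. idem e \<Longrightarrow> idem (prodl ls)"
proof (induction ls)
  case Nil then show ?case by (simp add: prodl_def idem_def)
next
  case (Cons a ls) then show ?case using idem_mul[of a "prodl ls"] by (simp add: prodl_def)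
qed

lemma prodl_absorb: "\<forall>e\<in>set ls. idem e \<Longrightarrow> e \<in> set ls \<Longrightarrow> prodl ls \<odot> e = prodl ls"
proof (induction ls)
  case Nil then show ?case by simp
next
  case (Cons a ls)
  have a: "idem a" and ls: "\<forall>e\<in>set ls. idem e" using Cons.prems by auto
  have P: "idem (prodl ls)" by (rule prodl_idem[OF ls])
  have G: "a \<in> G" "prodl ls \<in> G" "e \<in> G" using a P Cons.prems by (auto simp: idem_def)
  show ?case
  proof (cases "e = a")
    case True
    have "prodl (a # ls) \<odot> e = a \<odot> (prodl ls \<odot> a)" using G True by (simp add: prodl_def)
    also have "\<dots> = a \<odot> (a \<odot> prodl ls)" using idem_comm[OF P a] by simp
    also have "\<dots> = a \<odot> prodl ls" using idem_ext[OF a] G by simp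
    finally show ?thesis by (simp add: prodl_def)
  next
    case False
    then have "e \<in> set ls" using Cons.prems by simp
    then have "prodl ls \<odot> e = prodl ls" using Cons.IH ls by simp
    then show ?thesis using G by (simp add: prodl_def)
  qed
qed

lemma absorb_prefix:
  assumes r: "idem r" and P: "idem P" and t: "t \<in> G" and h: "r \<odot> (P \<odot> t) = r"
  shows "r \<odot> P = r"
proof -
  have G: "r \<in> G" "P \<in> G" using r P by (auto simp: idem_def)
  have h1: "r \<odot> ((P \<odot> t) \<odot> inv (P \<odot> t)) = r" by (rule rd[OF r _ h]) (use G t in simp)
  have "r \<odot> (P \<odot> inv P) = r" by (rule pre2[OF r G(2) t]) (use h1 G t in simp)
  then show ?thesis using idem_inv[OF P] idemD[OF P] G by simp
qed

end


lemma card3_split: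
  fixes V :: "nat set"
  assumes "finite V" "card V = 3"
  shows "V = {Min V, Min (V - {Min V}), Max V} \<and> Min V < Min (V - {Min V}) \<and> Min (V - {Min V}) < Max V"
proof -
  obtain a b c where V: "V = {a, b, c}" and d: "a \<noteq> b" "a \<noteq> c" "b \<noteq> c"
    using assms by (metis card_3_iff)
  show ?thesis
  proof (cases "a < b")
    case True
    then show ?thesis using d unfolding V
      by (cases "b < c"; cases "a < c") (auto simp: insert_Diff_if min_def max_def)
  next
    case False
    then show ?thesis using d unfolding V
      by (cases "b < c"; cases "a < c") (auto simp: insert_Diff_if min_def max_def)
  qed
qed

context invmon
begin

definition gX :: "(nat set \<Rightarrow> 'a) \<Rightarrow> nat \<Rightarrow> nat \<Rightarrow> 'a" where
  "gX X v0 a = (if a = v0 then one else X {v0, a})"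

definition relF :: "(nat set \<Rightarrow> 'a) \<Rightarrow> nat set \<Rightarrow> bool" where
  "relF X F \<longleftrightarrow> (let a0 = Min F; a1 = Min (F - {a0}); a2 = Max F in
     (card F = 3 \<longrightarrow> X F = X F \<odot> X {a0, a1} \<odot> X {a1, a2} \<odot> inv (X {a0, a2})) \<and>
     (4 \<le> card F \<longrightarrow> (\<exists>ls. (\<forall>e\<in>set ls. idem e) \<and> (\<forall>v\<in>F - {a0}. X (F - {v}) \<in> set ls) \<and>
        X F = X F \<odot> prodl ls \<odot> X {a0, a1} \<odot> X (F - {a0}) \<odot> inv (X {a0, a1}))))"

definition claimP :: "(nat set \<Rightarrow> 'a) \<Rightarrow> nat set \<Rightarrow> bool" where
  "claimP X V \<longleftrightarrow> (let r = X V; g = gX X (Min V) in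
     (\<forall>a\<in>V. \<forall>b\<in>V. a < b \<longrightarrow> r \<odot> (g a \<odot> X {a, b}) = r \<odot> g b) \<and>
     (\<forall>a\<in>V. r \<odot> (g a \<odot> inv (g a)) = r) \<and>
     (\<forall>F. F \<subseteq> V \<and> F \<noteq> V \<and> 3 \<le> card F \<longrightarrow> r \<odot> (g (Min F) \<odot> X F) = r \<odot> g (Min F)))"

lemma claimP_D:
  assumes "claimP X V"
  shows "\<And>a b. a \<in> V \<Longrightarrow> b \<in> V \<Longrightarrow> a < b \<Longrightarrow>
           X V \<odot> (gX X (Min V) a \<odot> X {a, b}) = X V \<odot> gX X (Min V) b"
    and "\<And>a. a \<in> V \<Longrightarrow> X V \<odot> (gX X (Min V) a \<odot> inv (gX X (Min V) a)) = X V"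
    and "\<And>F. F \<subseteq> V \<Longrightarrow> F \<noteq> V \<Longrightarrow> 3 \<le> card F \<Longrightarrow>
           X V \<odot> (gX X (Min V) (Min F) \<odot> X F) = X V \<odot> gX X (Min V) (Min F)"
  using assms unfolding claimP_def Let_def by blast+

lemma card2_sub: "finite V \<Longrightarrow> a \<in> V \<Longrightarrow> b \<in> V \<Longrightarrow> a \<noteq> b \<Longrightarrow> {a, b} \<subseteq> V \<and> card {a, b} = 2"
  by auto

lemma claim:
  assumes "finite V" "3 \<le> card V"
    and XG: "\<And>F. F \<subseteq> V \<Longrightarrow> 2 \<le> card F \<Longrightarrow> X F \<in> G"
    and XI: "\<And>F. F \<subseteq> V \<Longrightarrow> 3 \<le> card F \<Longrightarrow> idem (X F) \<and> relF X F"
  shows "claimP X V"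
  using assms
proof (induction "card V" arbitrary: V rule: less_induct)
  case less
  note fin = less.prems(1) and c3 = less.prems(2) and XG = less.prems(3) and XI = less.prems(4)
  define a0 where "a0 = Min V"
  define a1 where "a1 = Min (V - {a0})"
  define r where "r = X V"
  define g where "g = gX X a0"
  have Vne: "V \<noteq> {}" using c3 by auto
  have a0V: "a0 \<in> V" using fin Vne by (simp add: a0_def)
  have a0min: "\<And>x. x \<in> V \<Longrightarrow> a0 \<le> x" using fin by (simp add: a0_def)
  have X2: "X {a, b} \<in> G" if "a \<in> V" "b \<in> V" "a \<noteq> b" for a b
    using XG[of "{a,b}"] that by auto
  have gG: "g a \<in> G" if "a \<in> V" for a
    using X2[of a0 a] that a0V by (auto simp: g_def gX_def)
  have rI: "idem r" using XI[of V] c3 by (simp add: r_def)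
  have rG: "r \<in> G" using rI by (simp add: idem_def)
  have rel: "relF X V" using XI[of V] c3 by simp
  have g0: "g a0 = one" by (simp add: g_def gX_def)
  have ga: "a \<noteq> a0 \<Longrightarrow> g a = X {a0, a}" for a by (simp add: g_def gX_def)
  show ?case
  proof (cases "card V = 3")
    case True
    define a2 where "a2 = Max V"
    have V: "V = {a0, a1, a2}" and o: "a0 < a1" "a1 < a2"
      using card3_split[OF fin True] by (auto simp: a0_def a1_def a2_def)
    have G01: "X {a0, a1} \<in> G" and G12: "X {a1, a2} \<in> G" and G02: "X {a0, a2} \<in> G"
      using X2 o by (auto simp: V)
    have R: "r = r \<odot> X {a0, a1} \<odot> X {a1, a2} \<odot> inv (X {a0, a2})"
      using rel True unfolding relF_def Let_def a0_def[symmetric] a1_def[symmetric] a2_def[symmetric] r_def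
      by simp
    have R1: "r \<odot> ((X {a0, a1} \<odot> X {a1, a2}) \<odot> inv (X {a0, a2})) = r"
      using R G01 G12 G02 rG by simp
    have S: "r \<odot> (X {a0, a1} \<odot> X {a1, a2}) = r \<odot> X {a0, a2}"
      using split[OF rI _ _ R1] G01 G12 G02 by simp
    have rd1: "r \<odot> ((X {a0, a1} \<odot> X {a1, a2} \<odot> inv (X {a0, a2})) \<odot> inv (X {a0, a1} \<odot> X {a1, a2} \<odot> inv (X {a0, a2}))) = r"
      using rd[OF rI _ R1] G01 G12 G02 by simp
    have rdA: "r \<odot> (X {a0, a1} \<odot> inv (X {a0, a1})) = r"
      using pre2[OF rI G01, of "X {a1, a2} \<odot> inv (X {a0, a2})"] rd1 G01 G12 G02 rG by simp
    have rdB: "r \<odot> ((X {a0, a1} \<odot> X {a1, a2}) \<odot> inv (X {a0, a1} \<odot> X {a1, a2})) = r"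
      using pre2[OF rI _ _, of "X {a0, a1} \<odot> X {a1, a2}" "inv (X {a0, a2})"] rd1 G01 G12 G02 rG by simp
    have rdC: "r \<odot> (X {a0, a2} \<odot> inv (X {a0, a2})) = r"
      using transfer[OF rI _ _ rdB S] G01 G12 G02 by simp
    have E: "r \<odot> (g a \<odot> X {a, b}) = r \<odot> g b" if "a \<in> V" "b \<in> V" "a < b" for a b
    proof -
      have "a = a0 \<and> (b = a1 \<or> b = a2) \<or> a = a1 \<and> b = a2" using that o V by auto
      then show ?thesis
      proof
        assume "a = a0 \<and> (b = a1 \<or> b = a2)"
        then show ?thesis using ga[of b] o G01 G02 by (auto simp: g0)
      next
        assume "a = a1 \<and> b = a2"
        then show ?thesis using ga[of a1] ga[of a2] o S G01 G12 rG by simp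
      qed
    qed
    have Rd: "r \<odot> (g a \<odot> inv (g a)) = r" if "a \<in> V" for a
    proof -
      have "a = a0 \<or> a = a1 \<or> a = a2" using that V by auto
      then show ?thesis using ga[of a1] ga[of a2] o rdA rdC rG by (auto simp: g0)
    qed
    have F: "\<not> (F \<subseteq> V \<and> F \<noteq> V \<and> 3 \<le> card F)" for F
      using True fin by (metis card_subset_eq le_antisym card_mono)
    show ?thesis unfolding claimP_def Let_def a0_def[symmetric] g_def[symmetric] r_def[symmetric]
      using E Rd F by blast
  next
    case False
    then have c4: "4 \<le> card V" using c3 by simp
    obtain ls where ls: "\<forall>e\<in>set ls. idem e" "\<forall>v\<in>V - {a0}. X (V - {v}) \<in> set ls"
      and R: "X V = X V \<odot> prodl ls \<odot> X {a0, a1} \<odot> X (V - {a0}) \<odot> inv (X {a0, a1})"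
      using rel c4 unfolding relF_def Let_def a0_def[symmetric] a1_def[symmetric] by auto
    have a1V: "a1 \<in> V" "a1 \<noteq> a0" "a0 < a1"
    proof -
      have ne: "V - {a0} \<noteq> {}"
      proof
        assume "V - {a0} = {}"
        then have "V \<subseteq> {a0}" by auto
        then have "card V \<le> 1" using card_mono[of "{a0}" V] by simp
        with c3 show False by simp
      qed
      show "a1 \<in> V" "a1 \<noteq> a0" using Min_in[OF _ ne] fin by (auto simp: a1_def)
      then show "a0 < a1" using a0min by force
    qed
    have G01: "X {a0, a1} \<in> G" using X2 a1V a0V by auto
    have cD: "card (V - {v}) = card V - 1" if "v \<in> V" for v using that fin by simp
    have ZG: "X (V - {a0}) \<in> G" using XG[of "V - {a0}"] cD[OF a0V] c4 by auto
    have PI: "idem (prodl ls)" by (rule prodl_idem[OF ls(1)])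
    have PG: "prodl ls \<in> G" using PI by (simp add: idem_def)
    have R1: "r \<odot> (prodl ls \<odot> (X {a0, a1} \<odot> X (V - {a0}) \<odot> inv (X {a0, a1}))) = r"
      using R G01 ZG PG rG by (simp add: r_def)
    have rP: "r \<odot> prodl ls = r" by (rule absorb_prefix[OF rI PI _ R1]) (use G01 ZG in simp)
    have rPt: "r \<odot> (prodl ls \<odot> t) = r \<odot> t" if "t \<in> G" for t
      using assoc_ext[OF rP rG PG rG that] by simp
    have rD: "r \<odot> X (V - {v}) = r" if "v \<in> V" "v \<noteq> a0" for v
    proof -
      have m: "X (V - {v}) \<in> set ls" using ls(2) that by auto
      have eG: "X (V - {v}) \<in> G" using m ls(1) by (auto simp: idem_def)
      have "r \<odot> X (V - {v}) = r \<odot> (prodl ls \<odot> X (V - {v}))" using rPt eG by simp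
      also have "\<dots> = r \<odot> prodl ls" using prodl_absorb[OF ls(1) m] by simp
      finally show ?thesis using rP by simp
    qed
    have R2: "r \<odot> ((X {a0, a1} \<odot> X (V - {a0})) \<odot> inv (X {a0, a1})) = r"
      using R1 rPt G01 ZG by simp
    have S: "r \<odot> (X {a0, a1} \<odot> X (V - {a0})) = r \<odot> X {a0, a1}"
      using split[OF rI _ _ R2] G01 ZG by simp
    have IH: "claimP X (V - {v})" if "v \<in> V" "v \<noteq> a0" for v
    proof (rule less.hyps)
      show "card (V - {v}) < card V" using cD[OF that(1)] c3 by simp
      show "finite (V - {v})" using fin by simp
      show "3 \<le> card (V - {v})" using cD[OF that(1)] c4 by simp
    qed (use XG XI in auto)
    have minD: "Min (V - {v}) = a0" if "v \<in> V" "v \<noteq> a0" for v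
    proof -
      have "a0 \<in> V - {v}" using that a0V by auto
      then show ?thesis by (intro Min_eqI) (use fin a0min in auto)
    qed
    have Dsub: "X (V - {v}) \<in> G" if "v \<in> V" for v using XG[of "V - {v}"] cD[OF that] c4 by auto
    have lift': "r \<odot> y = r \<odot> z" if "v \<in> V" "v \<noteq> a0" "y \<in> G" "z \<in> G" "X (V - {v}) \<odot> y = X (V - {v}) \<odot> z" for v y z
      by (rule lift[OF rD[OF that(1,2)] rG Dsub[OF that(1)] that(3,4,5)])
    have pick: "\<exists>v\<in>V. v \<notin> S" if "finite S" "card S < card V" for S
    proof (rule ccontr)
      assume "\<not> ?thesis"
      then have "V \<subseteq> S" by auto
      then have "card V \<le> card S" using that card_mono by blast
      with that show False by simp
    qed
    have E: "r \<odot> (g a \<odot> X {a, b}) = r \<odot> g b" if "a \<in> V" "b \<in> V" "a < b" for a b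
    proof -
      have "card {a0, a, b} \<le> 3" by (auto simp: card_insert_if)
      then obtain v where v: "v \<in> V" "v \<notin> {a0, a, b}"
        using pick[of "{a0, a, b}"] c4 by auto
      have c: "claimP X (V - {v})" using IH v by auto
      have "X (V - {v}) \<odot> (g a \<odot> X {a, b}) = X (V - {v}) \<odot> g b"
        using claimP_D(1)[OF c, of a b] v that minD[of v] by (simp add: g_def)
      then show ?thesis using lift'[OF v(1), of "g a \<odot> X {a, b}" "g b"] v that gG X2 by simp
    qed
    have Rd: "r \<odot> (g a \<odot> inv (g a)) = r" if "a \<in> V" for a
    proof (cases "a = a0")
      case True then show ?thesis using g0 rG by simp
    next
      case False
      have "card {a0, a} \<le> 3" by (auto simp: card_insert_if)
      then obtain v where v: "v \<in> V" "v \<notin> {a0, a}"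
        using pick[of "{a0, a}"] c4 by auto
      have c: "claimP X (V - {v})" using IH v by auto
      have "X (V - {v}) \<odot> (g a \<odot> inv (g a)) = X (V - {v}) \<odot> one"
        using claimP_D(2)[OF c, of a] v that minD[of v] Dsub[of v] by (simp add: g_def)
      then have "r \<odot> (g a \<odot> inv (g a)) = r \<odot> one"
        using lift'[OF v(1), of "g a \<odot> inv (g a)" one] v that gG by simp
      then show ?thesis using rG by simp
    qed
    have F: "r \<odot> (g (Min F) \<odot> X F) = r \<odot> g (Min F)" if "F \<subseteq> V" "F \<noteq> V" "3 \<le> card F" for F
    proof -
      have finF: "finite F" using fin that finite_subset by blast
      have Fne: "F \<noteq> {}" using that by auto
      have mF: "Min F \<in> V" using Min_in[OF finF Fne] that by auto
      have XFG: "X F \<in> G" using XG that by auto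
      show ?thesis
      proof (cases "\<exists>v\<in>V - F. v \<noteq> a0")
        case True
        then obtain v where v: "v \<in> V" "v \<notin> F" "v \<noteq> a0" by auto
        have FD: "F \<subseteq> V - {v}" using v that by auto
        show ?thesis
        proof (cases "F = V - {v}")
          case True
          then have "Min F = a0" using minD v by simp
          then show ?thesis using rD[OF v(1,3)] True g0 rG Dsub[OF v(1)] by simp
        next
          case False
          have c: "claimP X (V - {v})" using IH v by auto
          have "X (V - {v}) \<odot> (g (Min F) \<odot> X F) = X (V - {v}) \<odot> g (Min F)"
            using claimP_D(3)[OF c FD False] that minD[of v] v by (simp add: g_def)
          then show ?thesis using lift'[OF v(1,3), of "g (Min F) \<odot> X F" "g (Min F)"] gG[OF mF] XFG by simp
        qed
      next
        case False
        then have h: "\<And>v. v \<in> V \<Longrightarrow> v \<notin> F \<Longrightarrow> v = a0" by blast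
        have "a0 \<notin> F"
        proof
          assume "a0 \<in> F"
          then have "V \<subseteq> F" using h by blast
          then show False using that(1,2) by blast
        qed
        then have "F = V - {a0}" using h that(1) by blast
        moreover have "Min (V - {a0}) = a1" by (simp add: a1_def)
        ultimately show ?thesis using S ga[of a1] a1V by simp
      qed
    qed
    show ?thesis unfolding claimP_def Let_def a0_def[symmetric] g_def[symmetric] r_def[symmetric]
      using E Rd F by blast
  qed
qed

definition lab :: "(nat set \<Rightarrow> 'a) \<Rightarrow> nat set \<times> bool \<Rightarrow> 'a" where
  "lab X s = (if snd s then inv (X (fst s)) else X (fst s))"

lemma card2_split:
  fixes F :: "nat set"
  assumes "card F = 2"
  shows "F = {Min F, Max F} \<and> Min F < Max F"
proof -
  obtain a b where F: "F = {a, b}" "a \<noteq> b" using assms by (metis card_2_iff)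
  show ?thesis using F by (cases "a < b") (auto simp: min_def max_def)
qed

lemma step_lemma:
  assumes k: "2 \<le> k" and c: "claimP X {0..k}"
    and XG: "\<And>F. F \<subseteq> {0..k} \<Longrightarrow> 2 \<le> card F \<Longrightarrow> X F \<in> G"
    and XI: "\<And>F. F \<subseteq> {0..k} \<Longrightarrow> 3 \<le> card F \<Longrightarrow> idem (X F) \<and> relF X F"
    and s: "bd_step k s"
  shows "X {0..k} \<odot> (gX X 0 (st_alpha s) \<odot> lab X s) = X {0..k} \<odot> gX X 0 (st_omega s)"
proof -
  obtain F iv where sF: "s = (F, iv)" by (cases s)
  have F: "F \<subseteq> {0..k}" "F \<noteq> {0..k}" "2 \<le> card F" "iv \<Longrightarrow> card F = 2"
    using s by (auto simp: bd_step_def sF)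
  have m0: "Min {0..k} = (0::nat)" by (simp add: Min_eqI)
  note E = claimP_D(1)[OF c, unfolded m0] and R = claimP_D(2)[OF c, unfolded m0]
    and FF = claimP_D(3)[OF c, unfolded m0]
  define r where "r = X {0..k}"
  define g where "g = gX X 0"
  have rI: "idem r" using XI[of "{0..k}"] k by (simp add: r_def)
  have rG: "r \<in> G" using rI by (simp add: idem_def)
  have gG: "g a \<in> G" if "a \<in> {0..k}" for a
    using XG[of "{0, a}"] that by (auto simp: g_def gX_def)
  show ?thesis
  proof (cases "card F = 2")
    case True
    define a where "a = Min F"
    define b where "b = Max F"
    have Fab: "F = {a, b}" "a < b" using card2_split[OF True] by (auto simp: a_def b_def)
    have ab: "a \<in> {0..k}" "b \<in> {0..k}" using F(1) Fab by auto
    have XG2: "X {a, b} \<in> G" using XG[of "{a,b}"] Fab ab by auto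
    have Eab: "r \<odot> (g a \<odot> X {a, b}) = r \<odot> g b" using E[of a b] ab Fab by (simp add: r_def g_def)
    show ?thesis
    proof (cases iv)
      case False
      then show ?thesis using Eab True Fab
        by (simp add: sF st_alpha_def st_omega_def lab_def a_def[symmetric] b_def[symmetric] r_def g_def)
    next
      case iv: True
      have Rb: "r \<odot> (g b \<odot> inv (g b)) = r" using R[of b] ab by (simp add: r_def g_def)
      have t: "r \<odot> ((g a \<odot> X {a, b}) \<odot> inv (g a \<odot> X {a, b})) = r"
        by (rule transfer[OF rI gG[OF ab(2)] _ Rb]) (use Eab gG ab XG2 in simp_all)
      have p: "r \<odot> (g a \<odot> (X {a, b} \<odot> inv (X {a, b}))) = r \<odot> g a"
        by (rule pre[OF rI gG[OF ab(1)] XG2]) (use t gG ab XG2 rG in simp)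
      have "r \<odot> (g b \<odot> inv (X {a, b})) = (r \<odot> g b) \<odot> inv (X {a, b})" using rG gG ab XG2 by simp
      also have "\<dots> = (r \<odot> (g a \<odot> X {a, b})) \<odot> inv (X {a, b})" using Eab by simp
      also have "\<dots> = r \<odot> g a" using p rG gG ab XG2 by simp
      finally show ?thesis using True Fab iv
        by (simp add: sF st_alpha_def st_omega_def lab_def a_def[symmetric] b_def[symmetric] r_def g_def)
    qed
  next
    case False
    then have c3: "3 \<le> card F" "\<not> iv" using F by auto
    have "r \<odot> (g (Min F) \<odot> X F) = r \<odot> g (Min F)" using FF[OF F(1,2) c3(1)] by (simp add: r_def g_def)
    then show ?thesis using False c3
      by (simp add: sF st_alpha_def st_omega_def lab_def r_def g_def)
  qed
qed

lemma path_lemma: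
  assumes k: "2 \<le> k" and c: "claimP X {0..k}"
    and XG: "\<And>F. F \<subseteq> {0..k} \<Longrightarrow> 2 \<le> card F \<Longrightarrow> X F \<in> G"
    and XI: "\<And>F. F \<subseteq> {0..k} \<Longrightarrow> 3 \<le> card F \<Longrightarrow> idem (X F) \<and> relF X F"
  shows "\<forall>s\<in>set q. bd_step k s \<Longrightarrow> q \<noteq> [] \<Longrightarrow> st_alpha (hd q) = a \<Longrightarrow>
    (\<forall>i. Suc i < length q \<longrightarrow> st_omega (q ! i) = st_alpha (q ! Suc i)) \<Longrightarrow>
    X {0..k} \<odot> (gX X 0 a \<odot> prodl (map (lab X) q)) = X {0..k} \<odot> gX X 0 (st_omega (last q))"
proof (induction q arbitrary: a)
  case Nil then show ?case by simp
next
  case (Cons s q)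
  define r where "r = X {0..k}"
  define g where "g = gX X 0"
  have rG: "r \<in> G" using XI[of "{0..k}"] k by (simp add: r_def idem_def)
  have gG: "g a \<in> G" if "a \<in> {0..k}" for a
    using XG[of "{0, a}"] that by (auto simp: g_def gX_def)
  have bd: "\<And>s. bd_step k s \<Longrightarrow> st_alpha s \<in> {0..k} \<and> st_omega s \<in> {0..k} \<and> lab X s \<in> G"
  proof -
    fix s assume b: "bd_step k s"
    obtain F iv where sF: "s = (F, iv)" by (cases s)
    have F: "F \<subseteq> {0..k}" "2 \<le> card F" using b by (auto simp: bd_step_def sF)
    have fin: "finite F" using F(1) finite_subset by blast
    have ne: "F \<noteq> {}" using F(2) by auto
    have "Min F \<in> {0..k}" "Max F \<in> {0..k}" using Min_in[OF fin ne] Max_in[OF fin ne] F(1) by auto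
    moreover have "X F \<in> G" using XG F by auto
    ultimately show "st_alpha s \<in> {0..k} \<and> st_omega s \<in> {0..k} \<and> lab X s \<in> G"
      by (simp add: sF st_alpha_def st_omega_def lab_def)
  qed
  have s: "bd_step k s" using Cons.prems by simp
  have st: "r \<odot> (g a \<odot> lab X s) = r \<odot> g (st_omega s)"
    using step_lemma[OF k c XG XI s] Cons.prems(3) by (simp add: r_def g_def)
  have labsG: "prodl (map (lab X) q) \<in> G"
    using Cons.prems(1) bd by (intro prodl_G) auto
  show ?case
  proof (cases "q = []")
    case True
    then show ?thesis using st bd[OF s] by (simp add: prodl_def r_def g_def)
  next
    case False
    have ch: "st_omega s = st_alpha (hd q)" using Cons.prems(4)[rule_format, of 0] False
      by (simp add: hd_conv_nth)
    have chq: "\<forall>i. Suc i < length q \<longrightarrow> st_omega (q ! i) = st_alpha (q ! Suc i)"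
    proof (intro allI impI)
      fix i assume "Suc i < length q"
      then show "st_omega (q ! i) = st_alpha (q ! Suc i)"
        using Cons.prems(4)[rule_format, of "Suc i"] by simp
    qed
    have IH: "r \<odot> (g (st_omega s) \<odot> prodl (map (lab X) q)) = r \<odot> g (st_omega (last q))"
      using Cons.IH[of "st_omega s", OF _ False ch[symmetric] chq] Cons.prems(1) by (simp add: r_def g_def)
    have aG: "a \<in> {0..k}" using bd[OF s] Cons.prems(3) by simp
    have "r \<odot> (g a \<odot> prodl (map (lab X) (s # q))) = (r \<odot> (g a \<odot> lab X s)) \<odot> prodl (map (lab X) q)"
      using rG gG[OF aG] bd[OF s] labsG by (simp add: prodl_def)
    also have "\<dots> = r \<odot> (g (st_omega s) \<odot> prodl (map (lab X) q))" using st rG bd[OF s] gG labsG by simp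
    also have "\<dots> = r \<odot> g (st_omega (last (s # q)))" using IH False by simp
    finally show ?thesis by (simp add: r_def g_def)
  qed
qed

lemma abstract_main:
  assumes k: "2 \<le> k"
    and XG: "\<And>F. F \<subseteq> {0..k} \<Longrightarrow> 2 \<le> card F \<Longrightarrow> X F \<in> G"
    and XI: "\<And>F. F \<subseteq> {0..k} \<Longrightarrow> 3 \<le> card F \<Longrightarrow> idem (X F) \<and> relF X F"
    and q: "closed_gpath_bd k 0 q"
  shows "X {0..k} \<odot> prodl (map (lab X) q) = X {0..k}"
proof -
  have c: "claimP X {0..k}" by (rule claim) (use k XG XI in auto)
  have rG: "X {0..k} \<in> G" using XI[of "{0..k}"] k by (simp add: idem_def)
  show ?thesis
  proof (cases "q = []")
    case True then show ?thesis using rG by (simp add: prodl_def)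
  next
    case False
    have h: "\<forall>s\<in>set q. bd_step k s" "st_alpha (hd q) = 0" "st_omega (last q) = 0"
      "\<forall>i. Suc i < length q \<longrightarrow> st_omega (q ! i) = st_alpha (q ! Suc i)"
      using q False by (auto simp: closed_gpath_bd_def)
    have "X {0..k} \<odot> (gX X 0 0 \<odot> prodl (map (lab X) q)) = X {0..k} \<odot> gX X 0 (st_omega (last q))"
      by (rule path_lemma[OF k c XG XI h(1) False h(2) h(4)])
    moreover have "prodl (map (lab X) q) \<in> G"
    proof (intro prodl_G subsetI)
      fix x assume "x \<in> set (map (lab X) q)"
      then obtain F iv where x: "x = lab X (F, iv)" "(F, iv) \<in> set q" by auto
      then have "F \<subseteq> {0..k}" "2 \<le> card F" using h(1) by (auto simp: bd_step_def)
      then show "x \<in> G" using XG x by (simp add: lab_def)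
    qed
    ultimately show ?thesis using h(3) rG by (simp add: gX_def)
  qed
qed

end


lemma winv_append[simp]: "winv (u @ v) = winv v @ winv u"
  by (simp add: winv_def)

lemma winv_winv[simp]: "winv (winv u) = u"
  by (induction u) (auto simp: winv_def)

lemma winv_Nil[simp]: "winv [] = []" by (simp add: winv_def)

lemma winv_single[simp]: "winv [(b, e)] = [(b, \<not> e)]" by (simp add: winv_def)

lemma winv_Cons[simp]: "winv ((b, e) # u) = winv u @ [(b, \<not> e)]"
  by (simp add: winv_def)

lemma winv_lists: "u \<in> lists (alph B dimB) \<Longrightarrow> winv u \<in> lists (alph B dimB)"
  by (induction u) (auto simp: winv_def alph_def)

definition fold01 :: "(nat \<Rightarrow> 'c \<Rightarrow> 'c) \<Rightarrow> 'c \<Rightarrow> nat \<Rightarrow> 'c" where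
  "fold01 d c n = foldl (\<lambda>x j. d j x) c (rev [2..<n+1])"

lemma iface01: "iface d dim c {0, 1} = fold01 d c (dim c)"
proof -
  have "{0..dim c} - {0, 1} = {2..<dim c + 1}" by auto
  then show ?thesis by (simp add: iface_def fold01_def)
qed

lemma fold01_in:
  assumes ss: "semisimplicial S dim d"
  shows "1 \<le> n \<Longrightarrow> c \<in> S \<Longrightarrow> dim c = n \<Longrightarrow> fold01 d c n \<in> S \<and> dim (fold01 d c n) = 1"
proof (induction n arbitrary: c rule: nat_induct_at_least)
  case base then show ?case by (simp add: fold01_def)
next
  case (Suc n)
  have "d (Suc n) c \<in> S \<and> dim (d (Suc n) c) = n" using ss Suc.prems unfolding semisimplicial_def by auto
  moreover have "fold01 d c (Suc n) = fold01 d (d (Suc n) c) n"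
    using Suc.hyps by (simp add: fold01_def)
  ultimately show ?case using Suc.IH by simp
qed

lemma fold01_map:
  assumes ssm: "ss_map S dim d B dimB dB f" and ss: "semisimplicial S dim d"
  shows "1 \<le> n \<Longrightarrow> c \<in> S \<Longrightarrow> dim c = n \<Longrightarrow> f (fold01 d c n) = fold01 dB (f c) n"
proof (induction n arbitrary: c rule: nat_induct_at_least)
  case base then show ?case by (simp add: fold01_def)
next
  case (Suc n)
  have "d (Suc n) c \<in> S \<and> dim (d (Suc n) c) = n" using ss Suc.prems unfolding semisimplicial_def by auto
  moreover have "fold01 d c (Suc n) = fold01 d (d (Suc n) c) n"
    using Suc.hyps by (simp add: fold01_def)
  moreover have "fold01 dB (f c) (Suc n) = fold01 dB (dB (Suc n) (f c)) n"
    using Suc.hyps by (simp add: fold01_def)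
  moreover have "f (d (Suc n) c) = dB (Suc n) (f c)" using ssm Suc.prems unfolding ss_map_def by auto
  ultimately show ?case using Suc.IH by simp
qed

lemma bl_lists:
  assumes ss: "semisimplicial B dimB dB" and b: "b \<in> B" "2 \<le> dimB b"
  shows "bl dimB dB b \<in> lists (alph B dimB)"
proof -
  have fi: "dB i b \<in> B \<and> dimB (dB i b) = dimB b - 1" if "i \<le> dimB b" for i
    using ss b that unfolding semisimplicial_def by auto
  have e: "iface dB dimB b {0, 1} \<in> B \<and> dimB (iface dB dimB b {0, 1}) = 1"
    using fold01_in[OF ss _ b(1) HOL.refl] iface01[of dB dimB b] b by simp
  have fi1: "dB i b \<in> B \<and> 1 \<le> dimB (dB i b)" if "i \<le> dimB b" for i
    using fi[OF that] b(2) by simp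
  show ?thesis using fi1 e b(1) by (auto simp: bl_def alph_def Let_def)
qed

locale pres =
  fixes B :: "'b set" and dimB :: "'b \<Rightarrow> nat" and dB :: "nat \<Rightarrow> 'b \<Rightarrow> 'b"
  assumes ssB: "semisimplicial B dimB dB"
begin

abbreviation "M \<equiv> Meq B dimB dB"
abbreviation "Lw \<equiv> lists (alph B dimB)"

lemma M_refl: "M u u" by (rule Meq.refl)
lemma M_sym: "M u v \<Longrightarrow> M v u" by (rule Meq.sym)
lemma M_trans: "M u v \<Longrightarrow> M v w \<Longrightarrow> M u w" by (rule Meq.trans)

lemma M_L: "M u v \<Longrightarrow> u \<in> Lw \<longleftrightarrow> v \<in> Lw"
proof (induction rule: Meq.induct)
  case (wagner1 u) then show ?case using winv_lists[of u] by auto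
next
  case (wagner2 u v) then show ?case using winv_lists[of u] winv_lists[of v] by auto
next
  case (idem b) then show ?case by auto
next
  case (rel b) then show ?case using bl_lists[OF ssB, of b] by auto
qed auto

definition cls :: "('b \<times> bool) list \<Rightarrow> ('b \<times> bool) list set" where
  "cls w = {v. M w v}"

lemma cls_eq: "cls u = cls v \<longleftrightarrow> M u v"
proof
  assume "cls u = cls v"
  then have "v \<in> cls u" using M_refl by (auto simp: cls_def)
  then show "M u v" by (simp add: cls_def)
next
  assume "M u v"
  then show "cls u = cls v" unfolding cls_def using M_sym M_trans by blast
qed

definition Qs where "Qs = cls ` Lw"
definition rep where "rep X = (SOME w. w \<in> Lw \<and> X = cls w)"
definition qmul where "qmul X Y = cls (rep X @ rep Y)"
definition qinv where "qinv X = cls (winv (rep X))"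
definition qone where "qone = cls []"

lemma rep_cls: "u \<in> Lw \<Longrightarrow> rep (cls u) \<in> Lw \<and> M u (rep (cls u))"
proof -
  assume u: "u \<in> Lw"
  have "\<exists>w. w \<in> Lw \<and> cls u = cls w" using u by blast
  then have "rep (cls u) \<in> Lw \<and> cls u = cls (rep (cls u))" unfolding rep_def by (rule someI_ex)
  then show ?thesis using cls_eq by blast
qed

lemma M_app: "M u u' \<Longrightarrow> M v v' \<Longrightarrow> u' \<in> Lw \<Longrightarrow> v \<in> Lw \<Longrightarrow> M (u @ v) (u' @ v')"
proof -
  assume h: "M u u'" "M v v'" "u' \<in> Lw" "v \<in> Lw"
  have "M ([] @ u @ v) ([] @ u' @ v)" by (rule Meq.cong[OF h(1)]) (use h in auto)
  moreover have "M (u' @ v @ []) (u' @ v' @ [])" by (rule Meq.cong[OF h(2)]) (use h in auto)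
  ultimately show ?thesis using M_trans by auto
qed

lemma qmul_cls: "u \<in> Lw \<Longrightarrow> v \<in> Lw \<Longrightarrow> qmul (cls u) (cls v) = cls (u @ v)"
  unfolding qmul_def cls_eq using rep_cls[of u] rep_cls[of v]
  by (metis M_app M_sym)

lemma Qs_cases: "X \<in> Qs \<Longrightarrow> (\<And>u. u \<in> Lw \<Longrightarrow> X = cls u \<Longrightarrow> P) \<Longrightarrow> P"
  unfolding Qs_def by blast

lemma cls_Qs[simp]: "u \<in> Lw \<Longrightarrow> cls u \<in> Qs"
  by (simp add: Qs_def)

sublocale Qm: amon Qs qmul qone
proof
  fix x y z assume "x \<in> Qs" "y \<in> Qs" "z \<in> Qs"
  then show "qmul (qmul x y) z = qmul x (qmul y z)"
    by (elim Qs_cases) (simp add: qmul_cls)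
next
  fix x y assume "x \<in> Qs" "y \<in> Qs"
  then show "qmul x y \<in> Qs" by (elim Qs_cases) (simp add: qmul_cls)
next
  show "qone \<in> Qs" by (simp add: qone_def)
next
  fix x assume "x \<in> Qs"
  then show "qmul qone x = x" by (elim Qs_cases) (simp add: qmul_cls qone_def)
next
  fix x assume "x \<in> Qs"
  then show "qmul x qone = x" by (elim Qs_cases) (simp add: qmul_cls qone_def)
qed

lemma cls_W1: "u \<in> Lw \<Longrightarrow> cls (u @ winv u @ u) = cls u"
  using Meq.wagner1 cls_eq by blast

lemma cls_W2: "u \<in> Lw \<Longrightarrow> v \<in> Lw \<Longrightarrow> cls (u @ winv u @ v @ winv v) = cls (v @ winv v @ u @ winv u)"
  using Meq.wagner2 cls_eq by blast

lemma wi_idem: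
  assumes x: "x \<in> Lw" and xx: "cls (x @ x) = cls x"
  shows "cls (winv x) = cls x"
proof -
  have wx: "winv x \<in> Lw" using winv_lists x by blast
  show ?thesis
  proof (rule Qm.idem_pseudo(1)[of "cls x" "cls (winv x)"])
    show "qmul (qmul (cls x) (cls (winv x))) (cls x) = cls x" using x wx cls_W1[OF x] by (simp add: qmul_cls)
    show "qmul (qmul (cls (winv x)) (cls x)) (cls (winv x)) = cls (winv x)"
      using x wx cls_W1[OF wx] by (simp add: qmul_cls)
    show "qmul (qmul (cls (winv x)) (cls x)) (qmul (cls x) (cls (winv x))) =
      qmul (qmul (cls x) (cls (winv x))) (qmul (cls (winv x)) (cls x))"
      using x wx cls_W2[OF wx x] by (simp add: qmul_cls)
    show "qmul (cls x) (cls x) = cls x" using x xx by (simp add: qmul_cls)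
  qed (use x wx in auto)
qed

lemma cls_app: "cls u = cls u' \<Longrightarrow> cls v = cls v' \<Longrightarrow> u' \<in> Lw \<Longrightarrow> v \<in> Lw \<Longrightarrow> cls (u @ v) = cls (u' @ v')"
  using M_app cls_eq by blast

lemma M_winv: "M u v \<Longrightarrow> u \<in> Lw \<Longrightarrow> M (winv u) (winv v)"
proof (induction rule: Meq.induct)
  case (refl u) show ?case by (rule Meq.refl)
next
  case (sym u v) then show ?case using M_L Meq.sym by blast
next
  case (trans u v w) then show ?case using M_L Meq.trans by blast
next
  case (cong u v x y)
  have "M (winv y @ winv u @ winv x) (winv y @ winv v @ winv x)"
    by (rule Meq.cong) (use cong winv_lists in auto)
  then show ?case by simp
next
  case (wagner1 u)
  have "M (winv u @ winv (winv u) @ winv u) (winv u)" by (rule Meq.wagner1) (use wagner1 winv_lists in auto)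
  then show ?case by simp
next
  case (wagner2 u v)
  have "M (v @ winv v @ u @ winv u) (u @ winv u @ v @ winv v)" by (rule Meq.wagner2) (use wagner2 in auto)
  then show ?case by simp
next
  case (idem b)
  have bL: "[(b, False)] \<in> Lw" using idem by (auto simp: alph_def)
  have bi: "[(b, True)] \<in> Lw" using idem by (auto simp: alph_def)
  have bb: "cls ([(b, False)] @ [(b, False)]) = cls [(b, False)]" using Meq.idem[where B=B and dimB=dimB and dB=dB, OF idem(1,2)] cls_eq by simp
  have w: "cls [(b, True)] = cls [(b, False)]" using wi_idem[OF bL bb] by simp
  have "cls ([(b, True)] @ [(b, True)]) = cls ([(b, False)] @ [(b, False)])"
    by (rule cls_app[OF w w]) (use bL bi in auto)
  then have "cls [(b, True), (b, True)] = cls [(b, True)]" using bb w by simp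
  then show ?case using cls_eq by (simp add: winv_def)
next
  case (rel b)
  define w where "w = bl dimB dB b"
  define bf where "bf = [(b, False)]"
  define bt where "bt = [(b, True)]"
  have wL: "w \<in> Lw" using bl_lists[OF ssB rel(1,2)] by (simp add: w_def)
  have wiL: "winv w \<in> Lw" using winv_lists wL by blast
  have bL: "bf \<in> Lw" "bt \<in> Lw" using rel by (auto simp: alph_def bf_def bt_def)
  have bb: "cls (bf @ bf) = cls bf" using Meq.idem[where B=B and dimB=dimB and dB=dB, OF rel(1,2)] cls_eq by (simp add: bf_def)
  have bt: "cls bt = cls bf" using wi_idem[OF bL(1) bb] by (simp add: bf_def bt_def)
  have bw: "cls (bf @ w) = cls bf" using Meq.rel[where B=B and dimB=dimB and dB=dB, OF rel(1,2)] cls_eq M_sym by (simp add: bf_def w_def)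
  define z where "z = winv w @ bf"
  have zL: "z \<in> Lw" using wiL bL by (simp add: z_def)
  have zz': "cls (z @ winv z) = cls z"
  proof -
    have "cls (z @ winv z) = qmul (cls (winv w)) (qmul (cls bf) (qmul (cls bt) (cls w)))"
      using wiL bL wL by (simp add: qmul_cls z_def bf_def bt_def)
    also have "\<dots> = qmul (cls (winv w)) (qmul (cls bf) (qmul (cls bf) (cls w)))" using bt by simp
    also have "\<dots> = qmul (cls (winv w)) (qmul (cls (bf @ bf)) (cls w))"
      using wiL bL wL by (simp add: qmul_cls)
    also have "\<dots> = qmul (cls (winv w)) (cls (bf @ w))" using bb bL wL by (simp add: qmul_cls)
    also have "\<dots> = cls z" using bw wiL bL by (simp add: qmul_cls z_def)
    finally show ?thesis .
  qed
  have zw: "cls (z @ winv z @ z) = cls z" by (rule cls_W1[OF zL])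
  have zzi: "winv z \<in> Lw" using winv_lists zL by blast
  have zz: "cls (z @ z) = cls z"
  proof -
    have "cls (z @ z) = qmul (cls z) (cls z)" using zL by (simp add: qmul_cls)
    also have "\<dots> = qmul (cls (z @ winv z)) (cls (z @ winv z))" using zz' by simp
    also have "\<dots> = cls (z @ winv z @ z @ winv z)" using zL zzi by (simp add: qmul_cls)
    also have "\<dots> = qmul (cls (z @ winv z @ z)) (cls (winv z))" using zL zzi by (simp add: qmul_cls)
    also have "\<dots> = qmul (cls z) (cls (winv z))" using zw by simp
    also have "\<dots> = cls z" using zz' zL zzi by (simp add: qmul_cls)
    finally show ?thesis .
  qed
  have z1: "cls (winv z) = cls z" by (rule wi_idem[OF zL zz])
  have z2: "cls (winv z) = cls bf"
  proof -
    have "cls (winv z) = qmul (cls bt) (cls w)" using bL wL by (simp add: z_def qmul_cls bf_def bt_def)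
    also have "\<dots> = qmul (cls bf) (cls w)" using bt by simp
    also have "\<dots> = cls bf" using bw bL wL by (simp add: qmul_cls)
    finally show ?thesis .
  qed
  have "cls (winv w @ bt) = qmul (cls (winv w)) (cls bt)" using wiL bL by (simp add: qmul_cls)
  also have "\<dots> = qmul (cls (winv w)) (cls bf)" using bt by simp
  also have "\<dots> = cls z" using wiL bL by (simp add: qmul_cls z_def)
  also have "\<dots> = cls bt" using z1 z2 bt by simp
  finally have "cls bt = cls (winv w @ bt)" by simp
  then show ?case using cls_eq by (simp add: w_def bt_def)
qed

lemma qinv_cls: "u \<in> Lw \<Longrightarrow> qinv (cls u) = cls (winv u)"
  unfolding qinv_def cls_eq using rep_cls[of u] M_winv M_sym by blast

sublocale Q: invmon Qs qmul qone qinv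
proof
  fix x assume "x \<in> Qs"
  then show "qinv x \<in> Qs" by (elim Qs_cases) (simp add: qinv_cls winv_lists)
next
  fix x assume "x \<in> Qs"
  then show "qmul (qmul x (qinv x)) x = x"
    by (elim Qs_cases) (simp add: qinv_cls winv_lists qmul_cls cls_W1)
next
  fix x assume "x \<in> Qs"
  then show "qinv (qinv x) = x" by (elim Qs_cases) (simp add: qinv_cls winv_lists)
next
  fix x y assume "x \<in> Qs" "y \<in> Qs"
  then show "qinv (qmul x y) = qmul (qinv y) (qinv x)"
    by (elim Qs_cases) (simp add: qinv_cls winv_lists qmul_cls)
next
  fix x y assume "x \<in> Qs" "y \<in> Qs"
  then show "qmul (qmul x (qinv x)) (qmul y (qinv y)) = qmul (qmul y (qinv y)) (qmul x (qinv x))"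
    by (elim Qs_cases) (simp add: qinv_cls winv_lists qmul_cls cls_W2)
next
  show "qinv qone = qone" by (simp add: qone_def qinv_cls)
qed

end


definition enum :: "nat set \<Rightarrow> nat \<Rightarrow> nat" where
  "enum A i = sorted_list_of_set A ! i"

lemma ssl: "sorted_wrt (<) (sorted_list_of_set (A::nat set))"
  using strict_sorted_list_of_set[of A] by simp

lemma enum_basic:
  assumes "finite A" "i < card A"
  shows "enum A i \<in> A" "card {a\<in>A. a < enum A i} = i"
proof -
  define xs where "xs = sorted_list_of_set A"
  have sx: "sorted_wrt (<) xs" using ssl by (simp add: xs_def)
  have set: "set xs = A" and len: "length xs = card A" and dx: "distinct xs"
    using assms by (auto simp: xs_def)
  show "enum A i \<in> A" using assms set len by (auto simp: enum_def xs_def[symmetric])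
  have "{a\<in>A. a < xs ! i} = set (take i xs)"
  proof
    show "set (take i xs) \<subseteq> {a\<in>A. a < xs ! i}"
    proof
      fix a assume "a \<in> set (take i xs)"
      then obtain j where j: "j < length (take i xs)" "a = take i xs ! j" by (auto simp: in_set_conv_nth)
      then have "j < i" "a = xs ! j" using assms len by auto
      then show "a \<in> {a\<in>A. a < xs ! i}"
        using sorted_wrt_nth_less[OF sx, of j i] assms len set by auto
    qed
  next
    show "{a\<in>A. a < xs ! i} \<subseteq> set (take i xs)"
    proof
      fix a assume a: "a \<in> {a\<in>A. a < xs ! i}"
      then obtain j where j: "j < length xs" "a = xs ! j" using set by (auto simp: in_set_conv_nth)
      have "j < i"
      proof (rule ccontr)
        assume "\<not> j < i"
        then have "i = j \<or> i < j" by auto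
        then have "xs ! i \<le> xs ! j" using sorted_wrt_nth_less[OF sx, of i j] j by auto
        then show False using a j by auto
      qed
      then show "a \<in> set (take i xs)" using j by (auto simp: in_set_conv_nth)
    qed
  qed
  moreover have "card (set (take i xs)) = i" using dx assms len by (simp add: distinct_card)
  ultimately show "card {a\<in>A. a < enum A i} = i" by (simp add: enum_def xs_def)
qed

lemma enum_unique:
  assumes "finite A" "x \<in> A" "card {a\<in>A. a < x} = i"
  shows "enum A i = x"
proof -
  define xs where "xs = sorted_list_of_set A"
  have set: "set xs = A" and len: "length xs = card A"
    using assms by (auto simp: xs_def)
  obtain j where j: "j < card A" "x = xs ! j" using assms set len by (metis in_set_conv_nth)
  then have "card {a\<in>A. a < x} = j" using enum_basic(2)[OF assms(1) j(1)] by (simp add: enum_def xs_def)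
  then show ?thesis using j assms by (simp add: enum_def xs_def)
qed

lemma card_less_bound: "finite A \<Longrightarrow> card {a\<in>A. a < x} \<le> card A"
  by (rule card_mono) auto

lemma enum_mono:
  assumes "finite A" "i < j" "j < card A"
  shows "enum A i < enum A j"
  using sorted_wrt_nth_less[OF ssl, of i j A] assms by (simp add: enum_def)

lemma enum_0: "finite A \<Longrightarrow> A \<noteq> {} \<Longrightarrow> enum A 0 = Min A"
  by (simp add: enum_def sorted_list_of_set_nonempty)

lemma enum_Suc: "finite A \<Longrightarrow> A \<noteq> {} \<Longrightarrow> enum A (Suc i) = enum (A - {Min A}) i"
  by (simp add: enum_def sorted_list_of_set_nonempty)

lemma enum_atLeastAtMost: "i \<le> n \<Longrightarrow> enum {0..n} i = i"
proof -
  assume "i \<le> n"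
  have "{0..n} = {0..<Suc n}" by auto
  then show ?thesis using \<open>i \<le> n\<close> by (simp add: enum_def del: upt_Suc)
qed

context
  fixes S :: "'c set" and dim :: "'c \<Rightarrow> nat" and d :: "nat \<Rightarrow> 'c \<Rightarrow> 'c"
  assumes ss: "semisimplicial S dim d"
begin

definition del :: "'c \<Rightarrow> nat set \<Rightarrow> 'c" where
  "del c D = foldl (\<lambda>x j. d j x) c (rev (sorted_list_of_set D))"

lemma del_empty[simp]: "del c {} = c" by (simp add: del_def)

lemma del_dec: "finite D \<Longrightarrow> D \<noteq> {} \<Longrightarrow> del c D = d (Min D) (del c (D - {Min D}))"
  by (simp add: del_def sorted_list_of_set_nonempty)

lemma iface_del: "iface d dim c F = del c ({0..dim c} - F)"
  by (simp add: iface_def del_def)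

lemma card_ge_from_min:
  fixes D :: "nat set"
  assumes "D \<subseteq> {0..n}" "D \<noteq> {}"
  shows "card D \<le> n + 1 - Min D"
proof -
  have f: "finite D" using assms finite_subset by blast
  have "D \<subseteq> {Min D..n}" using assms f by auto
  then have "card D \<le> card {Min D..n}" by (rule card_mono[rotated]) simp
  then show ?thesis by simp
qed

lemma del_in:
  "c \<in> S \<Longrightarrow> D \<subseteq> {0..dim c} \<Longrightarrow> card D \<le> dim c \<Longrightarrow> del c D \<in> S \<and> dim (del c D) = dim c - card D"
proof (induction "card D" arbitrary: D)
  case 0
  then have "D = {}" using finite_subset[of D "{0..dim c}"] by auto
  then show ?case using 0 by simp
next
  case (Suc k)
  have f: "finite D" using Suc.prems finite_subset by blast
  have ne: "D \<noteq> {}" using Suc.hyps by auto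
  define m where "m = Min D"
  have mD: "m \<in> D" using f ne by (simp add: m_def)
  have cD': "card (D - {m}) = k" using Suc.hyps mD f by simp
  have s1: "D - {m} \<subseteq> {0..dim c}" "card (D - {m}) \<le> dim c" using Suc.prems Suc.hyps(2) cD' by auto
  have IH: "del c (D - {m}) \<in> S \<and> dim (del c (D - {m})) = dim c - k"
    using Suc.hyps(1)[OF cD'[symmetric] Suc.prems(1) s1] cD' by simp
  have b: "card D \<le> dim c + 1 - m" using card_ge_from_min[OF Suc.prems(2) ne] by (simp add: m_def)
  have "m \<le> dim (del c (D - {m}))" "0 < dim (del c (D - {m}))" using IH b Suc.hyps(2) Suc.prems(3) by auto
  then have "d m (del c (D - {m})) \<in> S \<and> dim (d m (del c (D - {m}))) = dim (del c (D - {m})) - 1"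
    using ss IH unfolding semisimplicial_def by blast
  then show ?case using del_dec[OF f ne] IH Suc.hyps(2) by (simp add: m_def[symmetric])
qed

lemma del_face:
  "c \<in> S \<Longrightarrow> D \<subseteq> {0..dim c} \<Longrightarrow> card D < dim c \<Longrightarrow> i \<le> dim c - card D \<Longrightarrow>
   d i (del c D) = del c (insert (enum ({0..dim c} - D) i) D)"
proof (induction "card D" arbitrary: D i)
  case 0
  then have "D = {}" using finite_subset[of D "{0..dim c}"] by auto
  moreover have "enum {0..dim c} i = i" using 0 by (simp add: enum_atLeastAtMost)
  ultimately show ?case by (simp add: del_def)
next
  case (Suc k)
  define n where "n = dim c"
  have f: "finite D" using Suc.prems finite_subset by blast
  have ne: "D \<noteq> {}" using Suc.hyps by auto
  define j where "j = Min D"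
  define D' where "D' = D - {j}"
  define A where "A = {0..n} - D"
  have jD: "j \<in> D" using f ne by (simp add: j_def)
  have jmin: "\<And>x. x \<in> D \<Longrightarrow> j \<le> x" using f by (simp add: j_def)
  have cD': "card D' = k" using Suc.hyps jD f by (simp add: D'_def)
  have D'sub: "D' \<subseteq> {0..dim c}" using Suc.prems by (auto simp: D'_def)
  have dec: "del c D = d j (del c D')" using del_dec[OF f ne] by (simp add: j_def D'_def)
  have fA: "finite A" by (simp add: A_def)
  have lowA: "\<And>x. x < j \<Longrightarrow> x \<in> A" using jmin Suc.prems(2) jD by (force simp: A_def n_def)
  have jn: "j \<le> n" using jD Suc.prems(2) by (auto simp: n_def)
  show ?case
  proof (cases "i < j")
    case True
    have iA: "i \<in> A" using lowA True .
    have "{a\<in>A. a < i} = {0..<i}" using lowA True by auto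
    then have "enum A i = i" using enum_unique[OF fA iA] by simp
    moreover have "del c (insert i D) = d i (del c D)"
    proof -
      have iD: "i \<notin> D" using iA by (simp add: A_def)
      have "Min (insert i D) = i"
      proof (rule Min_eqI)
        show "finite (insert i D)" using f by simp
        show "\<And>y. y \<in> insert i D \<Longrightarrow> i \<le> y" using jmin True by fastforce
      qed simp
      then show ?thesis using del_dec[of "insert i D" c] f iD by simp
    qed
    ultimately show ?thesis by (simp add: A_def n_def)
  next
    case False
    define r0 where "r0 = del c D'"
    have r0: "r0 \<in> S" "dim r0 = n - k" using del_in[OF Suc.prems(1) D'sub] cD' Suc.prems(3) Suc.hyps(2)
      by (auto simp: r0_def n_def)
    have ik: "Suc i \<le> dim c - card D'" using Suc.prems(4) Suc.hyps(2) cD' Suc.prems(3) by simp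
    have IH: "d (Suc i) r0 = del c (insert (enum ({0..dim c} - D') (Suc i)) D')"
      using Suc.hyps(1)[OF cD'[symmetric] Suc.prems(1) D'sub _ ik] cD' Suc.hyps(2) Suc.prems(3)
      by (simp add: r0_def)
    define t where "t = enum ({0..n} - D') (Suc i)"
    define A' where "A' = {0..n} - D'"
    have A': "A' = insert j A" using jD jn by (auto simp: A'_def A_def D'_def)
    have fA': "finite A'" by (simp add: A'_def)
    have fD': "finite D'" using f by (simp add: D'_def)
    have cardA': "card A' = n + 1 - k" using cD' D'sub fD' card_Diff_subset[OF fD' D'sub] by (simp add: A'_def n_def)
    have SiA': "Suc i < card A'" using cardA' Suc.prems(3,4) Suc.hyps(2) by (simp add: n_def)
    have tA': "t \<in> A'" and ct: "card {a\<in>A'. a < t} = Suc i"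
      using enum_basic[OF fA' SiA'] by (simp_all add: t_def A'_def)
    have jt: "j < t"
    proof (rule ccontr)
      assume "\<not> j < t"
      then have "{a\<in>A'. a < t} \<subseteq> {0..<j}" by auto
      then have "card {a\<in>A'. a < t} \<le> j" using card_mono[of "{0..<j}"] by fastforce
      then show False using ct False by simp
    qed
    have tA: "t \<in> A" using tA' jt A' by auto
    have "{a\<in>A'. a < t} = insert j {a\<in>A. a < t}" using A' jt by auto
    moreover have "j \<notin> A" using jD by (simp add: A_def)
    ultimately have "card {a\<in>A. a < t} = i" using ct fA by simp
    then have et: "enum A i = t" using enum_unique[OF fA tA] by simp
    have r0_2: "2 \<le> dim r0" using r0 Suc.prems(3) Suc.hyps(2) cD' by (simp add: n_def)
    have swap: "d j (d (Suc i) r0) = d i (d j r0)"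
    proof -
      have si: "\<forall>c\<in>S. \<forall>i j. i < j \<and> j \<le> dim c \<and> 2 \<le> dim c \<longrightarrow> d i (d j c) = d (j - 1) (d i c)"
        using ss unfolding semisimplicial_def by blast
      have "j < Suc i" "Suc i \<le> dim r0" using False ik cD' r0(2) by (auto simp: n_def)
      then show ?thesis using si r0(1) r0_2 by fastforce
    qed
    have "del c (insert t D) = d j (del c (insert t D'))"
    proof -
      have tD: "t \<notin> D" using tA by (simp add: A_def)
      have fi: "finite (insert t D)" using f by simp
      have "Min (insert t D) = j" using f jmin jD jt by (auto intro!: Min_eqI)
      moreover have "insert t D - {j} = insert t D'" using jt by (auto simp: D'_def)
      ultimately show ?thesis using del_dec[OF fi] by simp
    qed
    then show ?thesis using IH swap dec et by (simp add: r0_def t_def A_def n_def)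
  qed
qed

lemma iface_in:
  assumes c: "c \<in> S" and F: "F \<subseteq> {0..dim c}" "F \<noteq> {}"
  shows "iface d dim c F \<in> S \<and> dim (iface d dim c F) = card F - 1"
proof -
  have fF: "finite F" using F finite_subset by blast
  have cD: "card ({0..dim c} - F) = dim c + 1 - card F" using card_Diff_subset[OF fF F(1)] by simp
  have cF: "card F \<le> dim c + 1" using card_mono[OF _ F(1)] by simp
  have "card F \<ge> 1" using fF F(2) by (simp add: Suc_leI card_gt_0_iff)
  then show ?thesis using del_in[OF c, of "{0..dim c} - F"] cD cF by (simp add: iface_del)
qed

lemma iface_face:
  assumes c: "c \<in> S" and F: "F \<subseteq> {0..dim c}" "2 \<le> card F" and i: "i < card F"
  shows "d i (iface d dim c F) = iface d dim c (F - {enum F i})"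
proof -
  have fF: "finite F" using F finite_subset by blast
  have cD: "card ({0..dim c} - F) = dim c + 1 - card F" using card_Diff_subset[OF fF F(1)] by simp
  have cF: "card F \<le> dim c + 1" using card_mono[OF _ F(1)] by simp
  have e: "{0..dim c} - ({0..dim c} - F) = F" using F by auto
  have eF: "enum F i \<in> F" using enum_basic(1)[OF fF i] .
  have "d i (del c ({0..dim c} - F)) = del c (insert (enum F i) ({0..dim c} - F))"
    using del_face[OF c, of "{0..dim c} - F" i] cD cF F(2) i e by simp
  moreover have "insert (enum F i) ({0..dim c} - F) = {0..dim c} - (F - {enum F i})" using eF F by auto
  ultimately show ?thesis by (simp add: iface_del)
qed

end

lemma enum_remove:
  assumes f: "finite F" and kj: "k < j" "j < card F"
  shows "enum (F - {enum F j}) k = enum F k"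
proof (rule enum_unique)
  have lt: "enum F k < enum F j" using enum_mono[OF f kj] .
  show "finite (F - {enum F j})" using f by simp
  show "enum F k \<in> F - {enum F j}" using enum_basic(1)[OF f, of k] kj lt by auto
  have "{a \<in> F - {enum F j}. a < enum F k} = {a \<in> F. a < enum F k}" using lt by auto
  then show "card {a \<in> F - {enum F j}. a < enum F k} = k" using enum_basic(2)[OF f, of k] kj by simp
qed

lemma two_set:
  assumes f: "finite F" "card F = 2"
  shows "F = {enum F 0, enum F 1}"
proof -
  have "enum F 0 < enum F 1" using enum_mono[OF f(1), of 0 1] f by simp
  moreover have "{enum F 0, enum F 1} \<subseteq> F" using enum_basic(1)[OF f(1)] f by auto
  ultimately show ?thesis using f by (metis card_2_iff card_subset_eq less_irrefl)
qed

lemma three_set: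
  assumes f: "finite F" "card F = 3"
  shows "F = {enum F 0, enum F 1, enum F 2} \<and> enum F 0 < enum F 1 \<and> enum F 1 < enum F 2"
proof -
  have o: "enum F 0 < enum F 1" "enum F 1 < enum F 2" using enum_mono[OF f(1)] f by auto
  moreover have s: "{enum F 0, enum F 1, enum F 2} \<subseteq> F" using enum_basic(1)[OF f(1)] f by auto
  moreover have "card {enum F 0, enum F 1, enum F 2} = 3" using o by simp
  ultimately show ?thesis using f card_subset_eq[OF f(1) s] by simp
qed

lemma fold01_iface:
  assumes ss: "semisimplicial S dim d" and c: "c \<in> S"
  shows "1 \<le> p \<Longrightarrow> F \<subseteq> {0..dim c} \<Longrightarrow> card F = p + 1 \<Longrightarrow>
    fold01 d (iface d dim c F) p = iface d dim c {enum F 0, enum F 1}"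
proof (induction p arbitrary: F rule: nat_induct_at_least)
  case base
  have f: "finite F" using base finite_subset by blast
  show ?case using two_set[OF f] base by (simp add: fold01_def)
next
  case (Suc p)
  have f: "finite F" using Suc finite_subset by blast
  define F' where "F' = F - {enum F (Suc p)}"
  have eF: "enum F (Suc p) \<in> F" using enum_basic(1)[OF f] Suc by simp
  have cF': "card F' = p + 1" using eF f Suc by (simp add: F'_def)
  have F'sub: "F' \<subseteq> {0..dim c}" using Suc by (auto simp: F'_def)
  have "fold01 d (iface d dim c F) (Suc p) = fold01 d (d (Suc p) (iface d dim c F)) p"
    using Suc.hyps by (simp add: fold01_def)
  also have "d (Suc p) (iface d dim c F) = iface d dim c F'"
    using iface_face[OF ss c Suc.prems(1)] Suc by (simp add: F'_def)
  also have "fold01 d (iface d dim c F') p = iface d dim c {enum F' 0, enum F' 1}"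
    using Suc.IH[OF F'sub cF'] .
  finally have h: "fold01 d (iface d dim c F) (Suc p) = iface d dim c {enum F' 0, enum F' 1}" .
  have "enum F' 0 = enum F 0" "enum F' 1 = enum F 1"
    using enum_remove[OF f, of 0 "Suc p"] enum_remove[OF f, of 1 "Suc p"] Suc by (auto simp: F'_def)
  then show ?case using h by simp
qed


context pres
begin

lemma cls_prodl: "ws \<in> Lw \<Longrightarrow> cls ws = Q.prodl (map (\<lambda>l. cls [l]) ws)"
proof (induction ws)
  case Nil then show ?case unfolding Q.prodl_def by (simp add: qone_def)
next
  case (Cons a ws)
  have "cls (a # ws) = qmul (cls [a]) (cls ws)" using Cons.prems by (simp add: qmul_cls)
  then show ?case using Cons by (simp add: Q.prodl_def)
qed

lemma final_thm:
  assumes ssS: "semisimplicial S dim d" and sm: "ss_map S dim d B dimB dB f"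
    and C: "C \<in> S" "2 \<le> dim C" and q: "closed_gpath_bd (dim C) 0 q"
  shows "Mle B dimB dB [(f C, False)] (img_label f d dim C q)"
proof -
  define k where "k = dim C"
  define V where "V = {0..k}"
  define fa where "fa F = f (iface d dim C F)" for F
  define X where "X F = cls [(fa F, False)]" for F
  have ic: "iface d dim C F \<in> S \<and> dim (iface d dim C F) = card F - 1" if "F \<subseteq> V" "F \<noteq> {}" for F
    using iface_in[OF ssS C(1)] that by (simp add: V_def k_def)
  have fB: "fa F \<in> B \<and> dimB (fa F) = card F - 1" if "F \<subseteq> V" "F \<noteq> {}" for F
    using ic[OF that] sm unfolding ss_map_def fa_def by auto
  have letL: "[(fa F, e)] \<in> Lw" if "F \<subseteq> V" "2 \<le> card F" for F e
  proof -
    have "F \<noteq> {}" using that by auto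
    then show ?thesis using fB[of F] that by (auto simp: alph_def)
  qed
  have XG: "X F \<in> Qs" if "F \<subseteq> V" "2 \<le> card F" for F
    using letL[OF that] by (simp add: X_def)
  have face: "dB i (fa F) = fa (F - {enum F i})" if "F \<subseteq> V" "2 \<le> card F" "i < card F" for F i
  proof -
    have ne: "F \<noteq> {}" using that by auto
    have "f (d i (iface d dim C F)) = dB i (f (iface d dim C F))"
      using ic[OF that(1) ne] sm that unfolding ss_map_def by auto
    then show ?thesis using iface_face[OF ssS C(1), of F i] that by (simp add: fa_def V_def k_def)
  qed
  have XI1: "Q.idem (X F)" if "F \<subseteq> V" "3 \<le> card F" for F
  proof -
    have ne: "F \<noteq> {}" using that by auto
    have b: "fa F \<in> B" "2 \<le> dimB (fa F)" using fB[OF that(1) ne] that by auto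
    have "cls ([(fa F, False)] @ [(fa F, False)]) = cls [(fa F, False)]"
      using Meq.idem[where B=B and dimB=dimB and dB=dB, OF b] cls_eq by simp
    then show ?thesis using letL[of F False] that XG[of F]
      by (simp add: Q.idem_def X_def qmul_cls)
  qed
  have XI2: "Q.relF X F" if F: "F \<subseteq> V" "3 \<le> card F" for F
  proof -
    have ne: "F \<noteq> {}" using that by auto
    have fF: "finite F" using F finite_subset by (auto simp: V_def)
    define b where "b = fa F"
    have b: "b \<in> B" "dimB b = card F - 1" using fB[OF that(1) ne] by (auto simp: b_def)
    have b2: "2 \<le> dimB b" using b F by simp
    have blL: "bl dimB dB b \<in> Lw" using bl_lists[OF ssB b(1) b2] .
    have XF: "X F = qmul (X F) (cls (bl dimB dB b))"
    proof -
      have h: "cls [(b, False)] = cls ((b, False) # bl dimB dB b)"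
        using Meq.rel[where B=B and dimB=dimB and dB=dB, OF b(1) b2] cls_eq by simp
      have "qmul (X F) (cls (bl dimB dB b)) = cls ([(b, False)] @ bl dimB dB b)"
        using letL[OF F(1), of False] F blL by (simp add: X_def b_def qmul_cls del: append_Cons)
      also have "\<dots> = X F" using h by (simp add: X_def b_def)
      finally show ?thesis by simp
    qed
    have e0: "enum F 0 = Min F" using enum_0[OF fF ne] .
    have e1: "enum F 1 = Min (F - {Min F})"
    proof -
      have cc: "card (F - {Min F}) = card F - 1" using fF ne by (simp add: card_Diff_singleton Min_in)
      have "F - {Min F} \<noteq> {}"
      proof
        assume em: "F - {Min F} = {}"
        have "card (F - {Min F}) = 0" by (simp only: em card.empty)
        then have "card F - 1 = 0" using cc by linarith
        then show False using F(2) by simp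
      qed
      then show ?thesis using enum_Suc[OF fF ne, of 0] enum_0[of "F - {Min F}"] fF by simp
    qed
    have dF: "\<And>i. i < card F \<Longrightarrow> enum F i \<in> F" using enum_basic(1)[OF fF] .
    have sub2: "\<And>i. i < card F \<Longrightarrow> F - {enum F i} \<subseteq> V \<and> 2 \<le> card (F - {enum F i})"
      using F fF dF by auto
    show ?thesis
    proof (cases "card F = 3")
      case True
      have t0: "F = {enum F 0, enum F 1, enum F 2} \<and> enum F 0 < enum F 1 \<and> enum F 1 < enum F 2"
        using three_set[OF fF True] .
      obtain e0' e1' e2' where E: "enum F 0 = e0'" "enum F 1 = e1'" "enum F 2 = e2'" by blast
      have t: "F = {e0', e1', e2'}" "e0' < e1'" "e1' < e2'" using t0 unfolding E by auto
      have mx: "Max F = e2'" using t by (simp add: max_def)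
      have fc: "dB i b = fa (F - {enum F i})" if "i < 3" for i
        using face[OF F(1) _ ] True that F by (simp add: b_def)
      have r2: "F - {e2'} = {e0', e1'}" and r0: "F - {e0'} = {e1', e2'}" and r1: "F - {e1'} = {e0', e2'}"
        using t by auto
      have d2: "dB 2 b = fa {e0', e1'}" using fc[of 2] E r2 by simp
      have d0: "dB 0 b = fa {e1', e2'}" using fc[of 0] E r0 by simp
      have d1: "dB 1 b = fa {e0', e2'}" using fc[of 1] E r1 by simp
      have s2: "{e0', e1'} \<subseteq> V" "{e1', e2'} \<subseteq> V" "{e0', e2'} \<subseteq> V" "2 \<le> card {e0', e1'}" "2 \<le> card {e1', e2'}" "2 \<le> card {e0', e2'}"
        using t F(1) by auto
      have Ls: "[(fa {e0', e1'}, False)] \<in> Lw" "[(fa {e1', e2'}, False)] \<in> Lw" "[(fa {e0', e2'}, True)] \<in> Lw"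
        "[(fa {e0', e2'}, False)] \<in> Lw"
        using letL s2 by auto
      have bl3: "bl dimB dB b = [(fa {e0', e1'}, False)] @ [(fa {e1', e2'}, False)] @ [(fa {e0', e2'}, True)]"
        using b True d0 d1 d2 by (simp add: bl_def)
      have "cls (bl dimB dB b) = qmul (X {e0', e1'}) (qmul (X {e1', e2'}) (qinv (X {e0', e2'})))"
        unfolding bl3 X_def using Ls by (simp add: qmul_cls qinv_cls)
      then have XF3: "X F = qmul (X F) (qmul (X {e0', e1'}) (qmul (X {e1', e2'}) (qinv (X {e0', e2'}))))"
        using XF by simp
      have G3: "X {e0', e1'} \<in> Qs" "X {e1', e2'} \<in> Qs" "X {e0', e2'} \<in> Qs" "X F \<in> Qs"
        using XG s2 F by auto
      have a0: "Min F = e0'" using e0 E by simp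
      have a1: "Min (F - {e0'}) = e1'" using e1 E a0 by simp
      show ?thesis unfolding Q.relF_def Let_def a0 a1 mx using True XF3 G3 by simp
    next
      case False
      define m where "m = card F - 1"
      have c4: "4 \<le> card F" using False F by simp
      have m: "dimB b = m" "3 \<le> m" "card F = m + 1" using b c4 by (auto simp: m_def)
      obtain a0' a1' where E: "enum F 0 = a0'" "enum F 1 = a1'" by blast
      have a0: "Min F = a0'" using e0 E by simp
      have a1: "Min (F - {a0'}) = a1'" using e1 E a0 by simp
      define c' where "c' = iface d dim C F"
      have c': "c' \<in> S" "dim c' = m" using ic[OF F(1) ne] by (auto simp: c'_def m_def)
      have FC: "F \<subseteq> {0..dim C}" using F(1) by (simp add: V_def k_def)
      have ee: "iface dB dimB b {0, 1} = fa {a0', a1'}"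
      proof -
        have "iface dB dimB b {0, 1} = fold01 dB b m" using iface01[of dB dimB b] m by simp
        also have "\<dots> = f (fold01 d c' m)"
          using fold01_map[OF sm ssS _ c'(1) c'(2)] m by (simp add: b_def fa_def c'_def)
        also have "fold01 d c' m = iface d dim C {enum F 0, enum F 1}"
          using fold01_iface[OF ssS C(1) _ FC] m by (simp add: c'_def)
        finally show ?thesis using E by (simp add: fa_def)
      qed
      have fc: "dB i b = fa (F - {enum F i})" if "i < card F" for i
        using face[OF F(1) _ that] F by (simp add: b_def)
      define js where "js = rev [1..<m+1]"
      have js: "\<And>i. i \<in> set js \<Longrightarrow> 1 \<le> i \<and> i < card F" using m by (auto simp: js_def)
      define ls where "ls = map (\<lambda>i. X (F - {enum F i})) js"
      define w1 where "w1 = map (\<lambda>i. (fa (F - {enum F i}), False)) js"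
      have blm: "bl dimB dB b = w1 @ [(fa {a0', a1'}, False)] @ [(fa (F - {a0'}), False)] @ [(fa {a0', a1'}, True)]"
      proof -
        have "map (\<lambda>i. (dB i b, False)) js = w1" unfolding w1_def using fc js by auto
        then show ?thesis using m ee fc[of 0] E m by (simp add: bl_def js_def Let_def)
      qed
      have w1L: "w1 \<in> Lw" using letL sub2 js by (auto simp: w1_def)
      have w1c: "cls w1 = Q.prodl ls"
      proof -
        have "map (\<lambda>l. cls [l]) w1 = ls" by (simp add: w1_def ls_def X_def)
        then show ?thesis using cls_prodl[OF w1L] by simp
      qed
      have s2: "{a0', a1'} \<subseteq> V" "2 \<le> card {a0', a1'}" "F - {a0'} \<subseteq> V" "2 \<le> card (F - {a0'})"
      proof -
        have "a0' \<in> F" "a1' \<in> F" "a0' < a1'" using dF[of 0] dF[of 1] enum_mono[OF fF, of 0 1] E m by auto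
        then show "{a0', a1'} \<subseteq> V" "2 \<le> card {a0', a1'}" using F by auto
        show "F - {a0'} \<subseteq> V" "2 \<le> card (F - {a0'})" using sub2[of 0] E m by auto
      qed
      have Ls: "[(fa {a0', a1'}, False)] \<in> Lw" "[(fa {a0', a1'}, True)] \<in> Lw" "[(fa (F - {a0'}), False)] \<in> Lw"
        using letL s2 by auto
      have "cls (bl dimB dB b) = qmul (Q.prodl ls) (qmul (X {a0', a1'}) (qmul (X (F - {a0'})) (qinv (X {a0', a1'}))))"
      proof -
        have r: "[(fa {a0', a1'}, False)] @ [(fa (F - {a0'}), False)] @ [(fa {a0', a1'}, True)] \<in> Lw" using Ls by simp
        have "cls (bl dimB dB b) = qmul (cls w1) (cls ([(fa {a0', a1'}, False)] @ [(fa (F - {a0'}), False)] @ [(fa {a0', a1'}, True)]))"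
          unfolding blm using qmul_cls[OF w1L r] by simp
        also have "cls ([(fa {a0', a1'}, False)] @ [(fa (F - {a0'}), False)] @ [(fa {a0', a1'}, True)]) =
          qmul (X {a0', a1'}) (qmul (X (F - {a0'})) (qinv (X {a0', a1'})))"
          unfolding X_def using Ls by (simp add: qmul_cls qinv_cls)
        finally show ?thesis using w1c by simp
      qed
      then have XF4: "X F = qmul (X F) (qmul (Q.prodl ls) (qmul (X {a0', a1'}) (qmul (X (F - {a0'})) (qinv (X {a0', a1'})))))"
        using XF by simp
      have lsI: "\<forall>e\<in>set ls. Q.idem e"
      proof
        fix e assume "e \<in> set ls"
        then obtain i where i: "i \<in> set js" "e = X (F - {enum F i})" by (auto simp: ls_def)
        have "F - {enum F i} \<subseteq> V" "3 \<le> card (F - {enum F i})" using js[OF i(1)] dF fF F c4 by auto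
        then show "Q.idem e" using XI1 i by simp
      qed
      have lsG: "Q.prodl ls \<in> Qs" using Q.prodl_idem[OF lsI] by (simp add: Q.idem_def)
      have cov: "\<forall>v\<in>F - {a0'}. X (F - {v}) \<in> set ls"
      proof
        fix v assume v: "v \<in> F - {a0'}"
        define i where "i = card {a\<in>F. a < v}"
        have ev: "enum F i = v" using enum_unique[OF fF _ i_def[symmetric]] v by simp
        have a0F: "a0' \<in> F" using a0 Min_in[OF fF ne] by simp
        have "a0' \<le> v" using a0 Min_le[OF fF] v by auto
        then have "a0' \<in> {a\<in>F. a < v}" using a0F v by auto
        then have i1: "1 \<le> i" using fF by (auto simp: i_def Suc_le_eq card_gt_0_iff)
        have "{a\<in>F. a < v} \<subseteq> F - {v}" by auto
        then have "i \<le> card (F - {v})" using fF by (simp add: i_def card_mono)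
        moreover have "card (F - {v}) = card F - 1" using v fF by (simp add: card_Diff_singleton)
        ultimately have "i < card F" using c4 by linarith
        then have "i \<in> set js" using i1 m by (auto simp: js_def)
        then show "X (F - {v}) \<in> set ls" using ev by (auto simp: ls_def)
      qed
      have G4: "X {a0', a1'} \<in> Qs" "X (F - {a0'}) \<in> Qs" "X F \<in> Qs" using XG s2 F by auto
      show ?thesis unfolding Q.relF_def Let_def a0 a1
        using False c4 XF4 G4 lsG lsI cov by (auto intro!: exI[of _ ls])
    qed
  qed
  have XI: "Q.idem (X F) \<and> Q.relF X F" if "F \<subseteq> {0..k}" "3 \<le> card F" for F
    using XI1 XI2 that by (simp add: V_def)
  have k2: "2 \<le> k" using C by (simp add: k_def)
  have qk: "closed_gpath_bd k 0 q" using q by (simp add: k_def)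
  have main: "qmul (X {0..k}) (Q.prodl (map (Q.lab X) q)) = X {0..k}"
    by (rule Q.abstract_main[OF k2 _ _ qk]) (use XG XI in \<open>auto simp: V_def\<close>)
  have steps: "\<And>F iv. (F, iv) \<in> set q \<Longrightarrow> F \<subseteq> V \<and> 2 \<le> card F"
    using q by (auto simp: closed_gpath_bd_def bd_step_def V_def k_def)
  define img where "img = img_label f d dim C q"
  have img: "img = map (\<lambda>(F, iv). (fa F, iv)) q" by (simp add: img_def img_label_def fa_def)
  have imgL: "img \<in> Lw" unfolding img using steps letL by auto
  have labs: "map (Q.lab X) q = map (\<lambda>l. cls [l]) img"
    unfolding img using steps letL by (auto simp: Q.lab_def X_def qinv_cls)
  have cimg: "cls img = Q.prodl (map (Q.lab X) q)" using cls_prodl[OF imgL] labs by simp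
  have XV: "X {0..k} = cls [(f C, False)]" by (simp add: X_def fa_def iface_def k_def)
  have fCB: "f C \<in> B" "dimB (f C) = dim C" using sm C unfolding ss_map_def by auto
  have fCL: "[(f C, False)] \<in> Lw" using fCB C by (auto simp: alph_def)
  have "cls ([(f C, False)] @ img) = cls [(f C, False)]"
    using main XV cimg qmul_cls[OF fCL imgL] by simp
  then have M1: "M [(f C, False)] ([(f C, False)] @ img)" using cls_eq M_sym by blast
  have M2: "M ([(f C, False)] @ [(f C, False)]) [(f C, False)]"
    using Meq.idem[where B=B and dimB=dimB and dB=dB, of "f C"] fCB C by simp
  show ?thesis unfolding Mle_def img_def[symmetric] using fCL M1 M2 by blast
qed

end

theorem mainTheorem7:
  fixes S :: "'c set" and dim :: "'c \<Rightarrow> nat" and d :: "nat \<Rightarrow> 'c \<Rightarrow> 'c"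
    and B :: "'b set" and dimB :: "'b \<Rightarrow> nat" and dB :: "nat \<Rightarrow> 'b \<Rightarrow> 'b"
    and n :: nat and f :: "'c \<Rightarrow> 'b" and C :: 'c and q :: "(nat set \<times> bool) list"
  assumes "is_BXP n B dimB dB"
    and "semisimplicial S dim d"
    and "immersion S dim d B dimB dB f"
    and "C \<in> S" and "2 \<le> dim C"
    and "closed_gpath_bd (dim C) 0 q"
  shows "Mle B dimB dB [(f C, False)] (img_label f d dim C q)"
proof -
  have ssB: "semisimplicial B dimB dB" using assms(1) by (simp add: is_BXP_def)
  have sm: "ss_map S dim d B dimB dB f" using assms(3) by (simp add: immersion_def)
  show ?thesis by (rule pres.final_thm[OF pres.intro[OF ssB] assms(2) sm assms(4,5,6)])
qed

end
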